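(* Let $\mathbf{\Omega}_1=\{\mathbf{x}\in\mathbb{R}^n: g_{1,\ell}(\mathbf{x})\ge0,\ \ell=1,\ldots,m_1\}$ and $\mathbf{\Omega}_2=\{\mathbf{u}\in\mathbb{R}^p: g_{2,\ell}(\mathbf{u})\ge0,\ \ell=1,\ldots,m_2\}$ with polynomials $g_{1,\ell}\in\mathbb{R}[\mathbf{x}]$, $g_{2,\ell}\in\mathbb{R}[\mathbf{u}]$, and let $\lambda$ be the Lebesgue measure on $\mathbf{\Omega}_1$. Let $f\in\mathbb{R}[\mathbf{x},\mathbf{u}]$, let $F:\mathbf{\Omega}_1\to\mathbb{R}$, $F(\mathbf{x})=\min\{f(\mathbf{x},\mathbf{u}):\mathbf{u}\in\mathbf{\Omega}_2\}$, and $\mathbf{G}=\{\mathbf{x}\in\mathbf{\Omega}_1: f(\mathbf{x},\mathbf{u})\ge0\ \forall\mathbf{u}\in\mathbf{\Omega}_2\}$. Assume $\mathbf{\Omega}_1\times\mathbf{\Omega}_2$ is compact (and nonempty) and that the quadratic module in $\mathbb{R}[\mathbf{x},\mathbf{u}]$ generated by $g_{1,1},\ldots,g_{1,m_1},g_{2,1},\ldots,g_{2,m_2}$ is Archimedean. For $d\in\mathbb{N}$ consider $$\rho_d=\sup_{p\in\mathbb{R}[\mathbf{x}]_{2d}}\Big\{\int_{\mathbf{\Omega}_1}p\,d\lambda:\ f(\mathbf{x},\mathbf{u})-p(\mathbf{x})=\sigma_0(\mathbf{x},\mathbf{u})+\sum_{\ell=1}^{m_1}\sigma_{1,\ell}(\mathbf{x},\mathbf{u})g_{1,\ell}(\mathbf{x})+\sum_{\ell=1}^{m_2}\sigma_{2,\ell}(\mathbf{x},\mathbf{u})g_{2,\ell}(\mathbf{u}),\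 \sigma_0\in\Sigma[\mathbf{x},\mathbf{u}]_d,\ \sigma_{i,\ell}\in\Sigma[\mathbf{x},\mathbf{u}]_{d-d_{i,\ell}}\Big\},$$ where $d_{i,\ell}=\lceil\deg(g_{i,\ell})/2\rceil$, and assume that for all sufficiently large $d$ this program has an optimal solution $p_d$. Let $\mathbf{G}_d=\{\mathbf{x}\in\mathbf{\Omega}_1: p_d(\mathbf{x})\ge0\}$ (so that $\mathbf{G}_d\subset\mathbf{G}$). If $\lambda(\{\mathbf{x}\in\mathbf{\Omega}_1:F(\mathbf{x})=0\})=0$, then $$\lim_{d\to\infty}\int_{\mathbf{\Omega}_1}|F-p_d|\,d\lambda=0\quad\text{and}\quad\lim_{d\to\infty}\lambda(\mathbf{G}\setminus\mathbf{G}_d)=0.$$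
   Context: $\mathbb{R}[\mathbf{x}]_{k}$ denotes polynomials of degree at most $k$. $\Sigma[\mathbf{x},\mathbf{u}]_k$ denotes the set of sums of squares of polynomials in $(\mathbf{x},\mathbf{u})$ of degree at most $k$ (SOS polynomials of degree at most $2k$). The quadratic module generated by polynomials $h_1,\ldots,h_r$ is $\{\sigma_0+\sum_i\sigma_ih_i:\sigma_i\text{ SOS}\}$; it is Archimedean if it contains $M-\|(\mathbf{x},\mathbf{u})\|^2$ for some $M>0$. *)

theory Defs
  imports "HOL-Analysis.Analysis"
begin

definition mono_deg :: "('i::finite \<Rightarrow> nat) \<Rightarrow> nat" where
  "mono_deg \<alpha> = (\<Sum>i\<in>UNIV. \<alpha> i)"

definition monom :: "('i::finite \<Rightarrow> nat) \<Rightarrow> real^'i \<Rightarrow> real" where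
  "monom \<alpha> x = (\<Prod>i\<in>UNIV. (x $ i) ^ \<alpha> i)"

definition poly_le :: "nat \<Rightarrow> (real^'i::finite \<Rightarrow> real) \<Rightarrow> bool" where
  "poly_le k h \<longleftrightarrow> (\<exists>c :: ('i \<Rightarrow> nat) \<Rightarrow> real.
      finite {\<alpha>. c \<alpha> \<noteq> 0} \<and> (\<forall>\<alpha>. c \<alpha> \<noteq> 0 \<longrightarrow> mono_deg \<alpha> \<le> k) \<and>
      (\<forall>x. h x = (\<Sum>\<alpha>\<in>{\<alpha>. c \<alpha> \<noteq> 0}. c \<alpha> * monom \<alpha> x)))"

definition is_poly :: "(real^'i::finite \<Rightarrow> real) \<Rightarrow> bool" where
  "is_poly h \<longleftrightarrow> (\<exists>k. poly_le k h)"

definition pdeg :: "(real^'i::finite \<Rightarrow> real) \<Rightarrow> nat" where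
  "pdeg h = (LEAST k. poly_le k h)"

definition poly2_le :: "nat \<Rightarrow> (real^'n::finite \<Rightarrow> real^'p::finite \<Rightarrow> real) \<Rightarrow> bool" where
  "poly2_le k h \<longleftrightarrow> (\<exists>c :: (('n \<Rightarrow> nat) \<times> ('p \<Rightarrow> nat)) \<Rightarrow> real.
      finite {\<gamma>. c \<gamma> \<noteq> 0} \<and> (\<forall>\<alpha> \<beta>. c (\<alpha>, \<beta>) \<noteq> 0 \<longrightarrow> mono_deg \<alpha> + mono_deg \<beta> \<le> k) \<and>
      (\<forall>x u. h x u = (\<Sum>\<gamma>\<in>{\<gamma>. c \<gamma> \<noteq> 0}. c \<gamma> * monom (fst \<gamma>) x * monom (snd \<gamma>) u)))"

definition is_poly2 :: "(real^'n::finite \<Rightarrow> real^'p::finite \<Rightarrow> real) \<Rightarrow> bool" where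
  "is_poly2 h \<longleftrightarrow> (\<exists>k. poly2_le k h)"

definition sos2_le :: "nat \<Rightarrow> (real^'n::finite \<Rightarrow> real^'p::finite \<Rightarrow> real) \<Rightarrow> bool" where
  "sos2_le k s \<longleftrightarrow> (\<exists>qs. (\<forall>q\<in>set qs. poly2_le k q) \<and>
      (\<forall>x u. s x u = (\<Sum>q\<leftarrow>qs. (q x u)^2)))"

definition is_sos2 :: "(real^'n::finite \<Rightarrow> real^'p::finite \<Rightarrow> real) \<Rightarrow> bool" where
  "is_sos2 s \<longleftrightarrow> (\<exists>k. sos2_le k s)"

definition semialg :: "(nat \<Rightarrow> real^'i::finite \<Rightarrow> real) \<Rightarrow> nat \<Rightarrow> (real^'i) set" where
  "semialg g m = {x. \<forall>l<m. 0 \<le> g l x}"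

definition qmodule ::
  "(nat \<Rightarrow> real^'n::finite \<Rightarrow> real) \<Rightarrow> nat \<Rightarrow> (nat \<Rightarrow> real^'p::finite \<Rightarrow> real) \<Rightarrow> nat
    \<Rightarrow> (real^'n \<Rightarrow> real^'p \<Rightarrow> real) set" where
  "qmodule g1 m1 g2 m2 = {h. \<exists>s0 s1 s2. is_sos2 s0 \<and> (\<forall>l<m1. is_sos2 (s1 l)) \<and> (\<forall>l<m2. is_sos2 (s2 l)) \<and>
      (\<forall>x u. h x u = s0 x u + (\<Sum>l<m1. s1 l x u * g1 l x) + (\<Sum>l<m2. s2 l x u * g2 l u))}"

definition archimedean_qm ::
  "(nat \<Rightarrow> real^'n::finite \<Rightarrow> real) \<Rightarrow> nat \<Rightarrow> (nat \<Rightarrow> real^'p::finite \<Rightarrow> real) \<Rightarrow> nat \<Rightarrow> bool" where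
  "archimedean_qm g1 m1 g2 m2 \<longleftrightarrow>
     (\<exists>M>0. (\<lambda>x u. M - ((norm x)^2 + (norm u)^2)) \<in> qmodule g1 m1 g2 m2)"

definition rho_feasible ::
  "(real^'n::finite \<Rightarrow> real^'p::finite \<Rightarrow> real) \<Rightarrow> (nat \<Rightarrow> real^'n \<Rightarrow> real) \<Rightarrow> nat
    \<Rightarrow> (nat \<Rightarrow> real^'p \<Rightarrow> real) \<Rightarrow> nat \<Rightarrow> nat \<Rightarrow> (real^'n \<Rightarrow> real) set" where
  "rho_feasible f g1 m1 g2 m2 d = {p. poly_le (2*d) p \<and>
     (\<exists>s0 s1 s2. sos2_le d s0 \<and>
        (\<forall>l<m1. sos2_le (d - nat \<lceil>real (pdeg (g1 l)) / 2\<rceil>) (s1 l)) \<and>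
        (\<forall>l<m2. sos2_le (d - nat \<lceil>real (pdeg (g2 l)) / 2\<rceil>) (s2 l)) \<and>
        (\<forall>x u. f x u - p x = s0 x u + (\<Sum>l<m1. s1 l x u * g1 l x) + (\<Sum>l<m2. s2 l x u * g2 l u)))}"

definition rho_optimal ::
  "(real^'n::finite \<Rightarrow> real^'p::finite \<Rightarrow> real) \<Rightarrow> (nat \<Rightarrow> real^'n \<Rightarrow> real) \<Rightarrow> nat
    \<Rightarrow> (nat \<Rightarrow> real^'p \<Rightarrow> real) \<Rightarrow> nat \<Rightarrow> nat \<Rightarrow> (real^'n \<Rightarrow> real) \<Rightarrow> bool" where
  "rho_optimal f g1 m1 g2 m2 d p \<longleftrightarrow> p \<in> rho_feasible f g1 m1 g2 m2 d \<and>
     (\<forall>q\<in>rho_feasible f g1 m1 g2 m2 d.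
        (LINT x:semialg g1 m1|lborel. q x) \<le> (LINT x:semialg g1 m1|lborel. p x))"

end

theory Submission
  imports Defs "HOL-Analysis.Analysis"
begin

locale qmod =
  fixes A :: "('z \<Rightarrow> real) set" and M :: "('z \<Rightarrow> real) set"
  assumes A_const: "(\<lambda>z. c) \<in> A"
    and A_add: "a \<in> A \<Longrightarrow> b \<in> A \<Longrightarrow> (\<lambda>z. a z + b z) \<in> A"
    and A_mult: "a \<in> A \<Longrightarrow> b \<in> A \<Longrightarrow> (\<lambda>z. a z * b z) \<in> A"
    and M_A: "m \<in> M \<Longrightarrow> m \<in> A"
    and M_add: "a \<in> M \<Longrightarrow> b \<in> M \<Longrightarrow> (\<lambda>z. a z + b z) \<in> M"
    and M_sqmult: "a \<in> A \<Longrightarrow> m \<in> M \<Longrightarrow> (\<lambda>z. (a z)^2 * m z) \<in> M"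
    and M_one: "(\<lambda>z. 1) \<in> M"
    and M_arch: "a \<in> A \<Longrightarrow> \<exists>N. (\<lambda>z. N - a z) \<in> M"
    and M_proper: "(\<lambda>z. -1) \<notin> M"
begin

lemma M_sq: "a \<in> A \<Longrightarrow> (\<lambda>z. (a z)^2) \<in> M"
  using M_sqmult[OF _ M_one] by simp

lemma M_const: "c \<ge> 0 \<Longrightarrow> (\<lambda>z. c) \<in> M"
  using M_sq[OF A_const[of "sqrt c"]] by simp

lemma M_scale: "c \<ge> 0 \<Longrightarrow> m \<in> M \<Longrightarrow> (\<lambda>z. c * m z) \<in> M"
  using M_sqmult[OF A_const[of "sqrt c"]] by simp

lemma A_scale: "a \<in> A \<Longrightarrow> (\<lambda>z. c * a z) \<in> A"
  using A_mult[OF A_const[of c]] by simp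

lemma A_neg: "a \<in> A \<Longrightarrow> (\<lambda>z. - a z) \<in> A"
  using A_scale[of a "-1"] by simp

lemma A_diff: "a \<in> A \<Longrightarrow> b \<in> A \<Longrightarrow> (\<lambda>z. a z - b z) \<in> A"
  using A_add[OF _ A_neg, of a b] by simp

lemma A_pow: "a \<in> A \<Longrightarrow> (\<lambda>z. a z ^ n) \<in> A"
  by (induction n) (auto intro: A_const dest: A_mult)

lemma M_add_const: "m \<in> M \<Longrightarrow> c \<ge> 0 \<Longrightarrow> (\<lambda>z. m z + c) \<in> M"
  using M_add[OF _ M_const] by blast

lemma ypow_mult:
  assumes y: "y \<in> A" "y \<in> M" and y1: "(\<lambda>z. 1 - y z) \<in> M"
  shows "(\<lambda>z. y z ^ K * (1 - y z)) \<in> M"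
proof (cases "even K")
  case True
  then obtain j where K: "K = 2*j" by blast
  have "(\<lambda>z. (y z ^ j)^2 * (1 - y z)) \<in> M"
    by (rule M_sqmult[OF A_pow[OF y(1)] y1])
  thus ?thesis by (simp add: K power_mult[symmetric] mult.commute[of 2])
next
  case False
  then obtain j where K: "K = 2*j+1" using oddE by blast
  have A1: "(\<lambda>z. y z ^ j * (1 - y z)) \<in> A"
    by (rule A_mult[OF A_pow[OF y(1)] M_A[OF y1]])
  have "(\<lambda>z. (y z ^ j * (1 - y z))^2 * y z + (y z ^ (j+1))^2 * (1 - y z)) \<in> M"
    by (rule M_add[OF M_sqmult[OF A1 y(2)] M_sqmult[OF A_pow[OF y(1)] y1]])
  moreover have "(\<lambda>z. (y z ^ j * (1 - y z))^2 * y z + (y z ^ (j+1))^2 * (1 - y z))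
       = (\<lambda>z. y z ^ K * (1 - y z))"
  proof (rule ext)
    fix z
    have e: "y z ^ K = (y z ^ j)^2 * y z" by (simp add: K power_add power_mult[symmetric] mult.commute)
    show "(y z ^ j * (1 - y z))^2 * y z + (y z ^ (j+1))^2 * (1 - y z) = y z ^ K * (1 - y z)"
      unfolding e by (simp add: power2_eq_square algebra_simps)
  qed
  ultimately show ?thesis by simp
qed

lemma one_minus_pow:
  assumes y: "y \<in> A" "y \<in> M" and y1: "(\<lambda>z. 1 - y z) \<in> M"
  shows "(\<lambda>z. 1 - y z ^ K) \<in> M"
proof (induction K)
  case 0
  then show ?case using M_const[of 0] by simp
next
  case (Suc K)
  have "(\<lambda>z. (1 - y z ^ K) + y z ^ K * (1 - y z)) \<in> M"
    by (rule M_add[OF Suc ypow_mult[OF y y1]])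
  thus ?case by (simp add: algebra_simps)
qed

lemma Pm_mult:
  assumes z: "zz \<in> A" and w: "w \<in> M"
  shows "(\<lambda>x. (zz x ^ (2 * 2^r) - 2 * real (2^r) * zz x + 2 * real (2^r) - 1) * w x) \<in> M"
proof (induction r)
  case 0
  have "(\<lambda>x. (zz x - 1)^2 * w x) \<in> M"
    by (rule M_sqmult[OF A_diff[OF z A_const] w])
  thus ?case by (simp add: power2_eq_square algebra_simps)
next
  case (Suc r)
  define m :: nat where "m = 2^r"
  have "(\<lambda>x. (zz x ^ (2*m) - 1)^2 * w x + 2 * ((zz x ^ (2 * m) - 2 * real m * zz x + 2 * real m - 1) * w x)) \<in> M"
    apply (rule M_add[OF M_sqmult[OF A_diff[OF A_pow[OF z] A_const] w]])
    apply (rule M_scale) using Suc by (auto simp: m_def)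
  moreover have "(\<lambda>x. (zz x ^ (2*m) - 1)^2 * w x + 2 * ((zz x ^ (2 * m) - 2 * real m * zz x + 2 * real m - 1) * w x))
    = (\<lambda>x. (zz x ^ (2 * 2^Suc r) - 2 * real (2^Suc r) * zz x + 2 * real (2^Suc r) - 1) * w x)"
  proof (rule ext)
    fix x
    have e: "zz x ^ (2 * 2^Suc r) = (zz x ^ (2*m))^2"
      by (simp add: m_def power_mult[symmetric] mult.commute mult.left_commute)
    show "(zz x ^ (2*m) - 1)^2 * w x + 2 * ((zz x ^ (2 * m) - 2 * real m * zz x + 2 * real m - 1) * w x)
      = (zz x ^ (2 * 2^Suc r) - 2 * real (2^Suc r) * zz x + 2 * real (2^Suc r) - 1) * w x"
      unfolding e by (simp add: m_def power2_eq_square algebra_simps)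
  qed
  ultimately show ?case by simp
qed

lemma jacobi:
  assumes t: "t \<in> A" "t \<in> M" "(\<lambda>z. 1 - t z) \<in> M" and u: "u \<in> M" "(\<lambda>z. N - u z) \<in> M"
    and e: "\<epsilon> > 0"
  shows "(\<lambda>z. t z * u z + \<epsilon>) \<in> M"
proof -
  define N' where "N' = max N 1"
  have uN': "(\<lambda>z. N' - u z) \<in> M"
    using M_add_const[OF u(2), of "N' - N"] by (simp add: N'_def)
  have N'pos: "N' > 0" by (simp add: N'_def)
  obtain r :: nat where r: "N' / \<epsilon> + 1 < 2^r"
    using real_arch_pow[of 2 "N' / \<epsilon> + 1"] by auto
  define m :: nat where "m = 2^r"
  define mm where "mm = real m"
  have mm1: "mm > N' / \<epsilon> + 1" using r by (simp add: mm_def m_def)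
  have mmpos: "mm \<ge> 1" using mm1 N'pos e
    by (smt (verit, ccfv_SIG) divide_pos_pos)
  define a where "a = (2*mm - 1) / (2*mm)"
  define c where "c = a^(2*m) / (2*mm - 1)"
  have a01: "0 \<le> a" "a \<le> 1" using mmpos by (auto simp: a_def)
  have c0: "c \<ge> 0" using a01 mmpos by (simp add: c_def)
  have cle: "c \<le> 1 / (2*mm - 1)"
    unfolding c_def using a01 mmpos by (simp add: divide_right_mono power_le_one)
  have Nc: "N' * c \<le> \<epsilon>"
  proof -
    have "N' * c \<le> N' / (2*mm - 1)" using cle N'pos by (simp add: divide_inverse mult_left_mono)
    also have "\<dots> \<le> \<epsilon>" using mm1 e N'pos mmpos
      by (simp add: divide_le_eq pos_divide_less_eq) (smt (verit) mult.commute pos_divide_less_eq)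
    finally show ?thesis .
  qed
  define y where "y = (\<lambda>z. 1 - t z)"
  have yA: "y \<in> A" unfolding y_def by (rule A_diff[OF A_const t(1)])
  have y1: "(\<lambda>z. 1 - y z) \<in> M" using t(2) by (simp add: y_def)
  define zz where "zz = (\<lambda>z. a * y z)"
  have zzA: "zz \<in> A" unfolding zz_def by (rule A_scale[OF yA])
  have T1: "(\<lambda>z. (1 / (2*mm - 1)) * ((zz z ^ (2 * 2^r) - 2 * real (2^r) * zz z + 2 * real (2^r) - 1) * u z)) \<in> M"
    apply (rule M_scale) using mmpos apply simp
    by (rule Pm_mult[OF zzA u(1)])
  have T2: "(\<lambda>z. c * ((y z ^ m)^2 * (N' - u z))) \<in> M"
    by (rule M_scale[OF c0 M_sqmult[OF A_pow[OF yA] uN']])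
  have T3: "(\<lambda>z. N' * c * (1 - y z ^ (2*m)) + (\<epsilon> - N' * c)) \<in> M"
    apply (rule M_add_const[OF M_scale])
    using N'pos c0 Nc apply simp_all
    by (rule one_minus_pow[OF yA _ y1]) (simp add: y_def t(3))
  have "(\<lambda>z. (1 / (2*mm - 1)) * ((zz z ^ (2 * 2^r) - 2 * real (2^r) * zz z + 2 * real (2^r) - 1) * u z)
      + c * ((y z ^ m)^2 * (N' - u z)) + (N' * c * (1 - y z ^ (2*m)) + (\<epsilon> - N' * c))) \<in> M"
    by (rule M_add[OF M_add[OF T1 T2] T3])
  moreover have "(\<lambda>z. (1 / (2*mm - 1)) * ((zz z ^ (2 * 2^r) - 2 * real (2^r) * zz z + 2 * real (2^r) - 1) * u z)
      + c * ((y z ^ m)^2 * (N' - u z)) + (N' * c * (1 - y z ^ (2*m)) + (\<epsilon> - N' * c)))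
     = (\<lambda>z. t z * u z + \<epsilon>)"
  proof (rule ext)
    fix z
    define Y where "Y = y z ^ (2*m)"
    define A2 where "A2 = a ^ (2*m)"
    have e1: "zz z ^ (2 * 2^r) = A2 * Y" by (simp add: zz_def Y_def A2_def m_def power_mult_distrib)
    have e2: "(y z ^ m)^2 = Y" by (simp add: Y_def power_mult[symmetric] mult.commute)
    have e0: "real (2^r) = mm" by (simp add: mm_def m_def)
    have e3: "2 * mm * zz z = (2*mm - 1) * y z"
      using mmpos by (simp add: zz_def a_def)
    have e4: "c = A2 / (2*mm - 1)" by (simp add: c_def A2_def)
    have e5: "t z = 1 - y z" by (simp add: y_def)
    have ne: "2*mm - 1 \<noteq> 0" using mmpos by simp
    show "(1 / (2*mm - 1)) * ((zz z ^ (2 * 2^r) - 2 * real (2^r) * zz z + 2 * real (2^r) - 1) * u z)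
      + c * ((y z ^ m)^2 * (N' - u z)) + (N' * c * (1 - y z ^ (2*m)) + (\<epsilon> - N' * c)) = t z * u z + \<epsilon>"
    proof -
      define D where "D = 2*mm - 1"
      have D0: "D \<noteq> 0" using ne by (simp add: D_def)
      have e6: "2 * mm = D + 1" by (simp add: D_def)
      have e7: "2 * mm * zz z = D * y z" using e3 by (simp add: D_def)
      have "(1 / D) * ((A2 * Y - D * y z + (D + 1) - 1) * u z) + A2 / D * (Y * (N' - u z))
          + (N' * (A2 / D) * (1 - Y) + (\<epsilon> - N' * (A2 / D))) = (1 - y z) * u z + \<epsilon>"
        using D0 by (simp add: field_simps)
      moreover have "2 * mm * zz z = 2 * real (2^r) * zz z" "2 * mm = 2 * real (2^r)" using e0 by auto
      ultimately show ?thesis using e7 e6 unfolding e1 e2 e4 e5 Y_def[symmetric] D_def[symmetric]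
        by (metis (no_types, lifting) D_def)
    qed
  qed
  ultimately show ?thesis by simp
qed


definition T :: "('z \<Rightarrow> real) set" where
  "T = {a \<in> A. \<forall>\<epsilon>>0. (\<lambda>z. a z + \<epsilon>) \<in> M}"

definition preord :: "('z \<Rightarrow> real) set \<Rightarrow> bool" where
  "preord P \<longleftrightarrow> P \<subseteq> A \<and> (\<forall>a\<in>P. \<forall>b\<in>P. (\<lambda>z. a z + b z) \<in> P) \<and>
     (\<forall>a\<in>P. \<forall>b\<in>P. (\<lambda>z. a z * b z) \<in> P) \<and> (\<forall>a\<in>A. (\<lambda>z. (a z)^2) \<in> P) \<and> (\<lambda>z. -1) \<notin> P"

lemma M_T: "M \<subseteq> T"
  unfolding T_def using M_A M_add_const by auto

lemma T_A: "T \<subseteq> A" unfolding T_def by auto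

lemma M_neg_const: "c < 0 \<Longrightarrow> (\<lambda>z. c) \<notin> M"
  using M_scale[of "-1/c" "\<lambda>z. c"] M_proper by auto

lemma T_add: "a \<in> T \<Longrightarrow> b \<in> T \<Longrightarrow> (\<lambda>z. a z + b z) \<in> T"
proof -
  assume a: "a \<in> T" and b: "b \<in> T"
  { fix \<epsilon> :: real assume e: "\<epsilon> > 0"
    have "(\<lambda>z. a z + \<epsilon>/2) \<in> M" "(\<lambda>z. b z + \<epsilon>/2) \<in> M" using a b e unfolding T_def by auto
    from M_add[OF this] have "(\<lambda>z. (a z + \<epsilon>/2) + (b z + \<epsilon>/2)) \<in> M" .
    hence "(\<lambda>z. a z + b z + \<epsilon>) \<in> M" by (simp add: algebra_simps) }
  thus ?thesis using a b T_A A_add unfolding T_def by auto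
qed

lemma MM_T: assumes a: "a \<in> M" and b: "b \<in> M" shows "(\<lambda>z. a z * b z) \<in> T"
proof -
  obtain Na where Na: "(\<lambda>z. Na - a z) \<in> M" using M_arch M_A[OF a] by blast
  obtain Nb where Nb: "(\<lambda>z. Nb - b z) \<in> M" using M_arch M_A[OF b] by blast
  define N where "N = max Na 1"
  have Npos: "N > 0" by (simp add: N_def)
  have NaM: "(\<lambda>z. N - a z) \<in> M" using M_add_const[OF Na, of "N - Na"] by (simp add: N_def)
  define t where "t = (\<lambda>z. a z / N)"
  have tA: "t \<in> A" unfolding t_def using A_scale[OF M_A[OF a], of "1/N"] by simp
  have tM: "t \<in> M" unfolding t_def using M_scale[OF _ a, of "1/N"] Npos by simp
  have t1: "(\<lambda>z. 1 - t z) \<in> M" unfolding t_def using M_scale[OF _ NaM, of "1/N"] Npos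
    by (simp add: diff_divide_distrib)
  { fix \<epsilon> :: real assume e: "\<epsilon> > 0"
    have "(\<lambda>z. t z * b z + \<epsilon> / N) \<in> M" by (rule jacobi[OF tA tM t1 b Nb]) (use e Npos in simp)
    from M_scale[OF _ this, of N] Npos
    have "(\<lambda>z. a z * b z + \<epsilon>) \<in> M" by (simp add: t_def algebra_simps) }
  thus ?thesis unfolding T_def using A_mult M_A a b by auto
qed

lemma T_mult: assumes a: "a \<in> T" and b: "b \<in> T" shows "(\<lambda>z. a z * b z) \<in> T"
proof -
  have aA: "a \<in> A" and bA: "b \<in> A" using a b T_A by auto
  obtain Na where Na: "(\<lambda>z. Na - a z) \<in> M" using M_arch aA by blast
  obtain Nb where Nb: "(\<lambda>z. Nb - b z) \<in> M" using M_arch bA by blast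
  define K where "K = max Na 0 + max Nb 0 + 1"
  have Kpos: "K \<ge> 1" by (simp add: K_def)
  have Na': "(\<lambda>z. max Na 0 - a z) \<in> M" using M_add_const[OF Na, of "max Na 0 - Na"] by simp
  have Nb': "(\<lambda>z. max Nb 0 - b z) \<in> M" using M_add_const[OF Nb, of "max Nb 0 - Nb"] by simp
  { fix \<epsilon> :: real assume e: "\<epsilon> > 0"
    define \<delta> where "\<delta> = min 1 (\<epsilon> / (2*K))"
    have d0: "\<delta> > 0" "\<delta> \<le> 1" using e Kpos by (auto simp: \<delta>_def)
    have dK2: "\<delta> * K \<le> \<epsilon>/2"
    proof -
      have "\<delta> * K \<le> (\<epsilon> / (2*K)) * K" using Kpos by (intro mult_right_mono) (auto simp: \<delta>_def)
      thus ?thesis using Kpos by simp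
    qed
    have adM: "(\<lambda>z. a z + \<delta>) \<in> M" using a d0 unfolding T_def by auto
    have bdM: "(\<lambda>z. b z + \<delta>) \<in> M" using b d0 unfolding T_def by auto
    have P1: "(\<lambda>z. (a z + \<delta>) * (b z + \<delta>) + \<epsilon>/2) \<in> M"
      using MM_T[OF adM bdM] e unfolding T_def by auto
    have dK: "\<delta> * \<delta> + \<delta> * max Na 0 + \<delta> * max Nb 0 \<le> \<epsilon>/2"
    proof -
      have "\<delta> * \<delta> + \<delta> * max Na 0 + \<delta> * max Nb 0 \<le> \<delta> * K"
        using d0 by (simp add: K_def algebra_simps mult_left_le_one_le)
      also have "\<dots> \<le> \<epsilon>/2" by (rule dK2)
      finally show ?thesis .
    qed
    have "(\<lambda>z. ((a z + \<delta>) * (b z + \<delta>) + \<epsilon>/2) + (\<delta> * (max Na 0 - a z) + \<delta> * (max Nb 0 - b z))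
             + (\<epsilon>/2 - (\<delta> * \<delta> + \<delta> * max Na 0 + \<delta> * max Nb 0))) \<in> M"
      apply (rule M_add_const[OF M_add[OF P1 M_add[OF M_scale M_scale]]])
      using d0 Na' Nb' dK by auto
    hence "(\<lambda>z. a z * b z + \<epsilon>) \<in> M" by (simp add: algebra_simps) }
  thus ?thesis unfolding T_def using A_mult aA bA by auto
qed

lemma T_sq: "a \<in> A \<Longrightarrow> (\<lambda>z. (a z)^2) \<in> T" using M_T M_sq by auto

lemma T_proper: "(\<lambda>z. -1) \<notin> T"
proof
  assume "(\<lambda>z. -1) \<in> T"
  hence "\<forall>\<epsilon>>0. (\<lambda>z. -1 + \<epsilon>) \<in> M" unfolding T_def by auto
  hence "(\<lambda>z. -1 + 1/2) \<in> M" by (metis half_gt_zero zero_less_one)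
  thus False using M_neg_const[of "-1/2"] by simp
qed

lemma preord_T: "preord T"
  unfolding preord_def using T_A T_add T_mult T_sq T_proper by auto


section \<open>Preorders\<close>

lemma pre_A: "preord P \<Longrightarrow> p \<in> P \<Longrightarrow> p \<in> A" unfolding preord_def by auto
lemma pre_add: "preord P \<Longrightarrow> a \<in> P \<Longrightarrow> b \<in> P \<Longrightarrow> (\<lambda>z. a z + b z) \<in> P" unfolding preord_def by auto
lemma pre_mult: "preord P \<Longrightarrow> a \<in> P \<Longrightarrow> b \<in> P \<Longrightarrow> (\<lambda>z. a z * b z) \<in> P" unfolding preord_def by auto
lemma pre_sq: "preord P \<Longrightarrow> a \<in> A \<Longrightarrow> (\<lambda>z. (a z)^2) \<in> P" unfolding preord_def by auto
lemma pre_proper: "preord P \<Longrightarrow> (\<lambda>z. -1) \<notin> P" unfolding preord_def by auto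
lemma pre_const: "preord P \<Longrightarrow> c \<ge> 0 \<Longrightarrow> (\<lambda>z. c) \<in> P"
  using pre_sq[OF _ A_const[of "sqrt c"]] by simp
lemma pre_scale: "preord P \<Longrightarrow> c \<ge> 0 \<Longrightarrow> p \<in> P \<Longrightarrow> (\<lambda>z. c * p z) \<in> P"
  using pre_mult[OF _ pre_const] by blast
lemma pre_add_const: "preord P \<Longrightarrow> p \<in> P \<Longrightarrow> c \<ge> 0 \<Longrightarrow> (\<lambda>z. p z + c) \<in> P"
  using pre_add[OF _ _ pre_const] by blast
lemma pre_neg_const: "preord P \<Longrightarrow> c < 0 \<Longrightarrow> (\<lambda>z. c) \<notin> P"
  using pre_scale[of P "-1/c" "\<lambda>z. c"] pre_proper by fastforce

lemma max_preord:
  assumes Q: "preord Q"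
  shows "\<exists>P. preord P \<and> Q \<subseteq> P \<and> (\<forall>P'. preord P' \<and> P \<subseteq> P' \<longrightarrow> P' = P)"
proof -
  have "\<exists>P\<in>{P. preord P \<and> Q \<subseteq> P}. \<forall>X\<in>{P. preord P \<and> Q \<subseteq> P}. P \<subseteq> X \<longrightarrow> X = P"
  proof (rule subset_Zorn_nonempty)
    show "{P. preord P \<and> Q \<subseteq> P} \<noteq> {}" using Q by auto
  next
    fix C assume C: "C \<noteq> {}" "subset.chain {P. preord P \<and> Q \<subseteq> P} C"
    hence Cs: "\<And>X. X \<in> C \<Longrightarrow> preord X \<and> Q \<subseteq> X" and Cc: "\<And>X Y. X \<in> C \<Longrightarrow> Y \<in> C \<Longrightarrow> X \<subseteq> Y \<or> Y \<subseteq> X"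
      by (auto simp: subset_chain_def)
    obtain X0 where X0: "X0 \<in> C" using C by auto
    have "preord (\<Union>C)"
      unfolding preord_def
    proof (intro conjI ballI)
      show "\<Union>C \<subseteq> A" using Cs pre_A by blast
    next
      fix a b assume "a \<in> \<Union>C" "b \<in> \<Union>C"
      then obtain X Y where XY: "X \<in> C" "Y \<in> C" "a \<in> X" "b \<in> Y" by auto
      from Cc[OF XY(1,2)] have "(\<lambda>z. a z + b z) \<in> \<Union>C \<and> (\<lambda>z. a z * b z) \<in> \<Union>C"
        using XY Cs pre_add pre_mult by blast
      thus "(\<lambda>z. a z + b z) \<in> \<Union>C" "(\<lambda>z. a z * b z) \<in> \<Union>C" by auto
    next
      fix a assume "a \<in> A" thus "(\<lambda>z. (a z)^2) \<in> \<Union>C" using X0 Cs pre_sq by blast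
    next
      show "(\<lambda>z. -1) \<notin> \<Union>C" using Cs pre_proper by blast
    qed
    thus "\<Union>C \<in> {P. preord P \<and> Q \<subseteq> P}" using X0 Cs by auto
  qed
  then obtain P where "preord P" "Q \<subseteq> P" "\<forall>X. preord X \<and> Q \<subseteq> X \<longrightarrow> P \<subseteq> X \<longrightarrow> X = P" by auto
  thus ?thesis by blast
qed

definition ext :: "('z \<Rightarrow> real) set \<Rightarrow> ('z \<Rightarrow> real) \<Rightarrow> ('z \<Rightarrow> real) set" where
  "ext P a = {f. \<exists>p\<in>P. \<exists>q\<in>P. f = (\<lambda>z. p z + a z * q z)}"

lemma ext_intro: "p \<in> P \<Longrightarrow> q \<in> P \<Longrightarrow> f = (\<lambda>z. p z + a z * q z) \<Longrightarrow> f \<in> ext P a"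
  unfolding ext_def by blast

lemma ext_preord:
  assumes P: "preord P" and a: "a \<in> A" and m1: "(\<lambda>z. -1) \<notin> ext P a"
  shows "preord (ext P a)" "P \<subseteq> ext P a" "a \<in> ext P a"
proof -
  have z: "(\<lambda>z. 0) \<in> P" using pre_const[OF P, of 0] by simp
  have o: "(\<lambda>z. 1) \<in> P" using pre_const[OF P, of 1] by simp
  show "P \<subseteq> ext P a"
  proof
    fix p assume p: "p \<in> P"
    show "p \<in> ext P a" by (rule ext_intro[OF p z]) simp
  qed
  show "a \<in> ext P a" by (rule ext_intro[OF z o]) simp
  show "preord (ext P a)" unfolding preord_def
  proof (intro conjI ballI)
    show "ext P a \<subseteq> A"
    proof
      fix f assume "f \<in> ext P a"
      then obtain p q where "p \<in> P" "q \<in> P" "f = (\<lambda>z. p z + a z * q z)" unfolding ext_def by blast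
      thus "f \<in> A" using A_add[OF pre_A[OF P] A_mult[OF a pre_A[OF P]]] by blast
    qed
  next
    fix f g assume "f \<in> ext P a" "g \<in> ext P a"
    then obtain p1 q1 p2 q2 where pq: "p1 \<in> P" "q1 \<in> P" "p2 \<in> P" "q2 \<in> P"
      and f: "f = (\<lambda>z. p1 z + a z * q1 z)" and g: "g = (\<lambda>z. p2 z + a z * q2 z)"
      unfolding ext_def by blast
    have "(\<lambda>z. f z + g z) = (\<lambda>z. (p1 z + p2 z) + a z * (q1 z + q2 z))"
      by (auto simp: f g algebra_simps)
    thus "(\<lambda>z. f z + g z) \<in> ext P a" by (rule ext_intro[OF pre_add[OF P pq(1) pq(3)] pre_add[OF P pq(2) pq(4)]])
    have "(\<lambda>z. f z * g z) = (\<lambda>z. (p1 z * p2 z + (a z)^2 * (q1 z * q2 z)) + a z * (p1 z * q2 z + q1 z * p2 z))"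
      by (auto simp: f g algebra_simps power2_eq_square)
    moreover have "(\<lambda>z. p1 z * p2 z + (a z)^2 * (q1 z * q2 z)) \<in> P"
      by (rule pre_add[OF P pre_mult[OF P pq(1) pq(3)] pre_mult[OF P pre_sq[OF P a] pre_mult[OF P pq(2) pq(4)]]])
    moreover have "(\<lambda>z. p1 z * q2 z + q1 z * p2 z) \<in> P"
      by (rule pre_add[OF P pre_mult[OF P pq(1) pq(4)] pre_mult[OF P pq(2) pq(3)]])
    ultimately show "(\<lambda>z. f z * g z) \<in> ext P a" by (intro ext_intro) 
  next
    fix b assume "b \<in> A"
    hence "(\<lambda>z. (b z)^2) \<in> P" by (rule pre_sq[OF P])
    thus "(\<lambda>z. (b z)^2) \<in> ext P a" by (rule ext_intro[OF _ z]) simp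
  next
    show "(\<lambda>z. -1) \<notin> ext P a" by (rule m1)
  qed
qed

lemma max_total:
  assumes P: "preord P" and mx: "\<forall>P'. preord P' \<and> P \<subseteq> P' \<longrightarrow> P' = P" and a: "a \<in> A"
  shows "a \<in> P \<or> (\<lambda>z. - a z) \<in> P"
proof (rule ccontr)
  assume nt: "\<not> (a \<in> P \<or> (\<lambda>z. - a z) \<in> P)"
  have na: "(\<lambda>z. - a z) \<in> A" by (rule A_neg[OF a])
  have e1: "(\<lambda>z. -1) \<in> ext P a"
  proof (rule ccontr)
    assume "(\<lambda>z. -1) \<notin> ext P a"
    from ext_preord[OF P a this] mx have "a \<in> P" by blast
    with nt show False by blast
  qed
  have e2: "(\<lambda>z. -1) \<in> ext P (\<lambda>z. - a z)"
  proof (rule ccontr)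
    assume "(\<lambda>z. -1) \<notin> ext P (\<lambda>z. - a z)"
    from ext_preord[OF P na this] mx have "(\<lambda>z. - a z) \<in> P" by blast
    with nt show False by blast
  qed
  obtain p1 q1 where pq1: "p1 \<in> P" "q1 \<in> P" "(\<lambda>z. -1) = (\<lambda>z. p1 z + a z * q1 z)"
    using e1 unfolding ext_def by blast
  obtain p2 q2 where pq2: "p2 \<in> P" "q2 \<in> P" "(\<lambda>z. -1) = (\<lambda>z. p2 z + - a z * q2 z)"
    using e2 unfolding ext_def by blast
  have "(\<lambda>z. (p1 z + p2 z) + (p1 z * p2 z + (a z)^2 * (q1 z * q2 z))) \<in> P"
    by (rule pre_add[OF P pre_add[OF P pq1(1) pq2(1)] pre_add[OF P pre_mult[OF P pq1(1) pq2(1)] pre_mult[OF P pre_sq[OF P a] pre_mult[OF P pq1(2) pq2(2)]]]])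
  moreover have "(\<lambda>z. (p1 z + p2 z) + (p1 z * p2 z + (a z)^2 * (q1 z * q2 z))) = (\<lambda>z. -1)"
  proof (rule ext)
    fix z
    have h1: "p1 z = -1 - a z * q1 z" using fun_cong[OF pq1(3), of z] by simp
    have h2: "p2 z = -1 + a z * q2 z" using fun_cong[OF pq2(3), of z] by simp
    show "(p1 z + p2 z) + (p1 z * p2 z + (a z)^2 * (q1 z * q2 z)) = -1"
      unfolding h1 h2 by (simp add: algebra_simps power2_eq_square)
  qed
  ultimately show False using pre_proper[OF P] by simp
qed


end
context qmod begin
section \<open>Character from a total archimedean preorder\<close>

definition phi :: "('z \<Rightarrow> real) set \<Rightarrow> ('z \<Rightarrow> real) \<Rightarrow> real" where
  "phi P a = Sup {r. (\<lambda>z. a z - r) \<in> P}"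

definition good :: "('z \<Rightarrow> real) set \<Rightarrow> bool" where
  "good P \<longleftrightarrow> preord P \<and> (\<forall>a\<in>A. a \<in> P \<or> (\<lambda>z. - a z) \<in> P) \<and> (\<forall>a\<in>A. \<exists>N. (\<lambda>z. N - a z) \<in> P)"

lemma phi_char:
  assumes G: "good P" and a: "a \<in> A"
  shows "\<forall>r<phi P a. (\<lambda>z. a z - r) \<in> P" "\<forall>r>phi P a. (\<lambda>z. r - a z) \<in> P"
proof -
  have P: "preord P" using G by (simp add: good_def)
  define R where "R = {r. (\<lambda>z. a z - r) \<in> P}"
  have arch: "\<forall>a\<in>A. \<exists>N. (\<lambda>z. N - a z) \<in> P" using G unfolding good_def by simp
  obtain N1 where N1: "(\<lambda>z. N1 - (- a z)) \<in> P" using bspec[OF arch A_neg[OF a]] by (elim exE)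
  have ne: "- N1 \<in> R" using N1 by (simp add: R_def add.commute)
  obtain N2 where N2: "(\<lambda>z. N2 - a z) \<in> P" using bspec[OF arch a] by (elim exE)
  have bd: "\<forall>r\<in>R. r \<le> N2"
  proof
    fix r assume "r \<in> R"
    hence "(\<lambda>z. a z - r) \<in> P" by (simp add: R_def)
    from pre_add[OF P this N2] have "(\<lambda>z. N2 - r) \<in> P" by simp
    show "r \<le> N2"
    proof (rule ccontr)
      assume "\<not> r \<le> N2"
      hence "(\<lambda>z. N2 - r) \<notin> P" using pre_neg_const[OF P, of "N2 - r"] by simp
      thus False using \<open>(\<lambda>z. N2 - r) \<in> P\<close> by simp
    qed
  qed
  have dc: "\<And>r s. r \<in> R \<Longrightarrow> s \<le> r \<Longrightarrow> s \<in> R"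
  proof -
    fix r s assume "r \<in> R" "s \<le> r"
    hence "(\<lambda>z. a z - r) \<in> P" "r - s \<ge> 0" by (simp_all add: R_def)
    from pre_add_const[OF P this] have "(\<lambda>z. a z - s) \<in> P" by simp
    thus "s \<in> R" by (simp add: R_def)
  qed
  have bdd: "bdd_above R" using bd by (auto simp: bdd_above_def)
  show "\<forall>r<phi P a. (\<lambda>z. a z - r) \<in> P"
  proof (intro allI impI)
    fix r assume "r < phi P a"
    hence "r < Sup R" by (simp add: phi_def R_def)
    moreover have neR: "R \<noteq> {}" using ne by auto
    ultimately obtain r' where "r' \<in> R" "r < r'" using less_cSup_iff[OF neR bdd] by auto
    hence "r \<in> R" using dc[of r' r] by simp
    thus "(\<lambda>z. a z - r) \<in> P" by (simp add: R_def)
  qed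
  show "\<forall>r>phi P a. (\<lambda>z. r - a z) \<in> P"
  proof (intro allI impI)
    fix r assume "r > phi P a"
    hence rR: "r \<notin> R"
    proof -
      assume "r > phi P a"
      hence "\<not> r \<le> Sup R" by (simp add: phi_def R_def)
      thus "r \<notin> R" using cSup_upper[OF _ bdd] by auto
    qed
    have AA: "(\<lambda>z. a z - r) \<in> A" using A_diff[OF a A_const] .
    have tot: "\<forall>a\<in>A. a \<in> P \<or> (\<lambda>z. - a z) \<in> P" using G unfolding good_def by simp
    have "(\<lambda>z. a z - r) \<notin> P" using rR by (simp add: R_def)
    hence "(\<lambda>z. - (a z - r)) \<in> P" using bspec[OF tot AA] by simp
    thus "(\<lambda>z. r - a z) \<in> P" by simp
  qed
qed

lemma phi_unique:
  assumes G: "good P" and a: "a \<in> A"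
    and lo: "\<forall>r<c. (\<lambda>z. a z - r) \<in> P" and hi: "\<forall>r>c. (\<lambda>z. r - a z) \<in> P"
  shows "phi P a = c"
proof -
  have P: "preord P" using G by (simp add: good_def)
  have contra: "\<And>s t. s < t \<Longrightarrow> (\<lambda>z. a z - t) \<in> P \<Longrightarrow> (\<lambda>z. s - a z) \<in> P \<Longrightarrow> False"
  proof -
    fix s t assume st: "s < (t::real)" "(\<lambda>z. a z - t) \<in> P" "(\<lambda>z. s - a z) \<in> P"
    hence "(\<lambda>z. (a z - t) + (s - a z)) \<in> P" using pre_add[OF P st(2) st(3)] by simp
    hence "(\<lambda>z. s - t) \<in> P" by simp
    thus False using pre_neg_const[OF P, of "s - t"] st by simp
  qed
  show ?thesis
  proof (rule ccontr)
    assume "phi P a \<noteq> c"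
    hence "phi P a < c \<or> c < phi P a" by auto
    thus False
    proof
      assume l: "phi P a < c"
      define s where "s = (phi P a + c) / 2"
      define t where "t = (s + c) / 2"
      have st: "s < t" "t < c" "phi P a < s" using l by (auto simp: s_def t_def)
      have "(\<lambda>z. a z - t) \<in> P" using lo st by simp
      moreover have "(\<lambda>z. s - a z) \<in> P" using phi_char(2)[OF G a] st by simp
      ultimately show False by (rule contra[OF st(1)])
    next
      assume l: "c < phi P a"
      define s where "s = (phi P a + c) / 2"
      define t where "t = (s + phi P a) / 2"
      have st: "s < t" "t < phi P a" "c < s" using l by (auto simp: s_def t_def)
      have "(\<lambda>z. a z - t) \<in> P" using phi_char(1)[OF G a] st by simp
      moreover have "(\<lambda>z. s - a z) \<in> P" using hi st by simp
      ultimately show False by (rule contra[OF st(1)])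
    qed
  qed
qed

lemma phi_const: assumes G: "good P" shows "phi P (\<lambda>z. c) = c"
proof (rule phi_unique[OF G A_const])
  have P: "preord P" using G by (simp add: good_def)
  show "\<forall>r<c. (\<lambda>z. c - r) \<in> P" using pre_const[OF P] by simp
  show "\<forall>r>c. (\<lambda>z. r - c) \<in> P" using pre_const[OF P] by simp
qed

lemma phi_add: assumes G: "good P" and a: "a \<in> A" and b: "b \<in> A"
  shows "phi P (\<lambda>z. a z + b z) = phi P a + phi P b"
proof (rule phi_unique[OF G A_add[OF a b]])
  have P: "preord P" using G by (simp add: good_def)
  show "\<forall>r<phi P a + phi P b. (\<lambda>z. a z + b z - r) \<in> P"
  proof (intro allI impI)
    fix r assume r: "r < phi P a + phi P b"
    define d where "d = (phi P a + phi P b - r) / 2"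
    have "(\<lambda>z. a z - (phi P a - d)) \<in> P" "(\<lambda>z. b z - (phi P b - d)) \<in> P"
      using phi_char(1)[OF G a] phi_char(1)[OF G b] r by (auto simp: d_def)
    from pre_add[OF P this] show "(\<lambda>z. a z + b z - r) \<in> P" by (simp add: d_def algebra_simps)
  qed
  show "\<forall>r>phi P a + phi P b. (\<lambda>z. r - (a z + b z)) \<in> P"
  proof (intro allI impI)
    fix r assume r: "r > phi P a + phi P b"
    define d where "d = (r - phi P a - phi P b) / 2"
    have "(\<lambda>z. (phi P a + d) - a z) \<in> P" "(\<lambda>z. (phi P b + d) - b z) \<in> P"
      using phi_char(2)[OF G a] phi_char(2)[OF G b] r by (auto simp: d_def)
    from pre_add[OF P this] show "(\<lambda>z. r - (a z + b z)) \<in> P" by (simp add: d_def algebra_simps)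
  qed
qed

lemma phi_scale_pos: assumes G: "good P" and a: "a \<in> A" and c: "c > 0"
  shows "phi P (\<lambda>z. c * a z) = c * phi P a"
proof (rule phi_unique[OF G A_scale[OF a]])
  have P: "preord P" using G by (simp add: good_def)
  show "\<forall>r<c * phi P a. (\<lambda>z. c * a z - r) \<in> P"
  proof (intro allI impI)
    fix r assume "r < c * phi P a"
    hence "r / c < phi P a" using c by (simp add: divide_less_eq mult.commute)
    hence "(\<lambda>z. a z - r / c) \<in> P" using phi_char(1)[OF G a] by simp
    from pre_scale[OF P _ this, of c] c show "(\<lambda>z. c * a z - r) \<in> P" by (simp add: algebra_simps)
  qed
  show "\<forall>r>c * phi P a. (\<lambda>z. r - c * a z) \<in> P"
  proof (intro allI impI)
    fix r assume "r > c * phi P a"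
    hence "r / c > phi P a" using c by (simp add: less_divide_eq mult.commute)
    hence "(\<lambda>z. r / c - a z) \<in> P" using phi_char(2)[OF G a] by simp
    from pre_scale[OF P _ this, of c] c show "(\<lambda>z. r - c * a z) \<in> P" by (simp add: algebra_simps)
  qed
qed

lemma phi_scale: assumes G: "good P" and a: "a \<in> A"
  shows "phi P (\<lambda>z. c * a z) = c * phi P a"
proof -
  have neg: "phi P (\<lambda>z. - a z) = - phi P a"
  proof -
    have "phi P (\<lambda>z. a z + - a z) = phi P a + phi P (\<lambda>z. - a z)" by (rule phi_add[OF G a A_neg[OF a]])
    thus ?thesis using phi_const[OF G, of 0] by simp
  qed
  consider "c > 0" | "c = 0" | "c < 0" by linarith
  thus ?thesis
  proof cases
    case 1 thus ?thesis by (rule phi_scale_pos[OF G a])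
  next
    case 2 thus ?thesis using phi_const[OF G, of 0] by simp
  next
    case 3
    have "phi P (\<lambda>z. (- c) * (- a z)) = (- c) * phi P (\<lambda>z. - a z)"
      by (rule phi_scale_pos[OF G A_neg[OF a]]) (use 3 in simp)
    thus ?thesis using neg by simp
  qed
qed

lemma phi_nonneg: assumes G: "good P" and p: "p \<in> P" shows "phi P p \<ge> 0"
proof (rule ccontr)
  have P: "preord P" using G by (simp add: good_def)
  assume "\<not> phi P p \<ge> 0"
  hence l: "phi P p < phi P p / 2" by simp
  have "(\<lambda>z. phi P p / 2 - p z) \<in> P" using phi_char(2)[OF G pre_A[OF P p]] l by simp
  from pre_add[OF P this p] have "(\<lambda>z. phi P p / 2) \<in> P" by simp
  thus False using pre_neg_const[OF P, of "phi P p / 2"] l by simp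
qed

lemma phi_sq0: assumes G: "good P" and a: "a \<in> A" and a0: "phi P a = 0"
  shows "phi P (\<lambda>z. (a z)^2) = 0"
proof (rule phi_unique[OF G A_mult[OF a a, unfolded power2_eq_square[symmetric]]])
  have P: "preord P" using G by (simp add: good_def)
  show "\<forall>r<0. (\<lambda>z. (a z)\<^sup>2 - r) \<in> P"
  proof (intro allI impI)
    fix r :: real assume "r < 0"
    from pre_add_const[OF P pre_sq[OF P a], of "- r"] this show "(\<lambda>z. (a z)\<^sup>2 - r) \<in> P" by simp
  qed
  show "\<forall>r>0. (\<lambda>z. r - (a z)\<^sup>2) \<in> P"
  proof (intro allI impI)
    fix r :: real assume r: "r > 0"
    define d where "d = sqrt r"
    have d: "d > 0" "d * d = r" using r by (auto simp: d_def)
    have "(\<lambda>z. d - a z) \<in> P" using phi_char(2)[OF G a] a0 d by auto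
    moreover have "(\<lambda>z. a z - (- d)) \<in> P"
    proof -
      have "- d < phi P a" using a0 d by simp
      thus ?thesis using phi_char(1)[OF G a] by blast
    qed
    ultimately have "(\<lambda>z. (d - a z) * (a z - (- d))) \<in> P" by (rule pre_mult[OF P])
    thus "(\<lambda>z. r - (a z)\<^sup>2) \<in> P" using d by (simp add: algebra_simps power2_eq_square)
  qed
qed

lemma phi_sq: assumes G: "good P" and a: "a \<in> A"
  shows "phi P (\<lambda>z. (a z)^2) = (phi P a)^2"
proof -
  define \<alpha> where "\<alpha> = phi P a"
  define a' where "a' = (\<lambda>z. a z + (- \<alpha>))"
  have a'A: "a' \<in> A" unfolding a'_def by (rule A_add[OF a A_const])
  have a'0: "phi P a' = 0"
  proof -
    have "phi P a' = phi P a + phi P (\<lambda>z. - \<alpha>)" unfolding a'_def by (rule phi_add[OF G a A_const])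
    also have "phi P (\<lambda>z. - \<alpha>) = - \<alpha>" by (rule phi_const[OF G])
    finally show ?thesis by (simp add: \<alpha>_def)
  qed
  have sqA: "(\<lambda>z. (a' z)^2) \<in> A" using A_mult[OF a'A a'A] by (simp add: power2_eq_square)
  have e: "(\<lambda>z. (a z)^2) = (\<lambda>z. ((a' z)^2 + (2*\<alpha>) * a' z) + \<alpha>^2)"
    by (auto simp: a'_def power2_eq_square algebra_simps)
  have "phi P (\<lambda>z. ((a' z)^2 + (2*\<alpha>) * a' z) + \<alpha>^2) = phi P (\<lambda>z. (a' z)^2 + (2*\<alpha>) * a' z) + \<alpha>^2"
    using phi_add[OF G A_add[OF sqA A_scale[OF a'A]] A_const] phi_const[OF G] by simp
  also have "phi P (\<lambda>z. (a' z)^2 + (2*\<alpha>) * a' z) = 0"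
    using phi_add[OF G sqA A_scale[OF a'A]] phi_sq0[OF G a'A a'0] phi_scale[OF G a'A] a'0 by simp
  finally show ?thesis using e by (simp add: \<alpha>_def)
qed

lemma phi_mult: assumes G: "good P" and a: "a \<in> A" and b: "b \<in> A"
  shows "phi P (\<lambda>z. a z * b z) = phi P a * phi P b"
proof -
  have s: "(\<lambda>z. a z + b z) \<in> A" by (rule A_add[OF a b])
  have d: "(\<lambda>z. a z - b z) \<in> A" by (rule A_diff[OF a b])
  have s2: "(\<lambda>z. (a z + b z)^2) \<in> A" using A_mult[OF s s] by (simp add: power2_eq_square)
  have d2: "(\<lambda>z. (a z - b z)^2) \<in> A" using A_mult[OF d d] by (simp add: power2_eq_square)
  have e: "(\<lambda>z. a z * b z) = (\<lambda>z. (1/4) * (a z + b z)^2 + (-1/4) * (a z - b z)^2)"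
    by (auto simp: power2_eq_square algebra_simps)
  have 1: "phi P (\<lambda>z. (1/4) * (a z + b z)^2 + (-1/4) * (a z - b z)^2)
     = phi P (\<lambda>z. (1/4) * (a z + b z)^2) + phi P (\<lambda>z. (-1/4) * (a z - b z)^2)"
    by (rule phi_add[OF G A_scale[OF s2] A_scale[OF d2]])
  have 2: "phi P (\<lambda>z. (1/4) * (a z + b z)^2) = (1/4) * (phi P a + phi P b)^2"
    unfolding phi_scale[OF G s2] phi_sq[OF G s] phi_add[OF G a b] ..
  have 3: "phi P (\<lambda>z. a z - b z) = phi P a - phi P b"
  proof -
    have "phi P (\<lambda>z. a z + (-1) * b z) = phi P a + phi P (\<lambda>z. (-1) * b z)"
      by (rule phi_add[OF G a A_scale[OF b]])
    also have "phi P (\<lambda>z. (-1) * b z) = (-1) * phi P b" by (rule phi_scale[OF G b])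
    finally show ?thesis by simp
  qed
  have 4: "phi P (\<lambda>z. (-1/4) * (a z - b z)^2) = (-1/4) * (phi P a - phi P b)^2"
    unfolding phi_scale[OF G d2] phi_sq[OF G d] 3 ..
  show ?thesis unfolding e 1 2 4 by (simp add: power2_eq_square algebra_simps)
qed

end
context qmod begin

lemma T_arch: "a \<in> A \<Longrightarrow> \<exists>N. (\<lambda>z. N - a z) \<in> T"
  using M_arch M_T by blast

theorem KD:
  assumes h: "h \<in> A" and \<delta>: "\<delta> > 0"
    and H: "\<And>\<phi>. (\<And>a b. a \<in> A \<Longrightarrow> b \<in> A \<Longrightarrow> \<phi> (\<lambda>z. a z + b z) = \<phi> a + \<phi> b) \<Longrightarrow>
               (\<And>a b. a \<in> A \<Longrightarrow> b \<in> A \<Longrightarrow> \<phi> (\<lambda>z. a z * b z) = \<phi> a * \<phi> b) \<Longrightarrow>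
               (\<And>c. \<phi> (\<lambda>z. c) = c) \<Longrightarrow> (\<And>m. m \<in> M \<Longrightarrow> \<phi> m \<ge> 0) \<Longrightarrow> \<phi> h \<ge> \<delta>"
  shows "h \<in> M"
proof -
  have PT: "preord T" by (rule preord_T)
  define R where "R = {r. (\<lambda>z. h z - r) \<in> T}"
  have "\<exists>r\<in>R. r > 0"
  proof (rule ccontr)
    assume "\<not> (\<exists>r\<in>R. r > 0)"
    hence R0: "\<forall>r\<in>R. r \<le> 0" by auto
    define c where "c = \<delta> / 2"
    define g where "g = (\<lambda>z. h z - c)"
    have gA: "g \<in> A" unfolding g_def by (rule A_diff[OF h A_const])
    have ngA: "(\<lambda>z. - g z) \<in> A" by (rule A_neg[OF gA])
    show False
    proof (cases "(\<lambda>z. -1) \<in> ext T (\<lambda>z. - g z)")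
      case False
      note E = ext_preord[OF PT ngA False]
      obtain P where P: "preord P" "ext T (\<lambda>z. - g z) \<subseteq> P"
        and mx: "\<forall>P'. preord P' \<and> P \<subseteq> P' \<longrightarrow> P' = P"
        using max_preord[OF E(1)] by blast
      have TP: "T \<subseteq> P" using E(2) P(2) by blast
      have G: "good P" unfolding good_def
      proof (intro conjI ballI)
        show "preord P" by (rule P(1))
      next
        fix a assume "a \<in> A" thus "a \<in> P \<or> (\<lambda>z. - a z) \<in> P" by (rule max_total[OF P(1) mx])
      next
        fix a assume "a \<in> A"
        then obtain N where "(\<lambda>z. N - a z) \<in> T" using T_arch by blast
        thus "\<exists>N. (\<lambda>z. N - a z) \<in> P" using TP by blast
      qed
      have "phi P h \<ge> \<delta>"
      proof (rule H)
        show "\<And>a b. a \<in> A \<Longrightarrow> b \<in> A \<Longrightarrow> phi P (\<lambda>z. a z + b z) = phi P a + phi P b"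
          by (rule phi_add[OF G])
        show "\<And>a b. a \<in> A \<Longrightarrow> b \<in> A \<Longrightarrow> phi P (\<lambda>z. a z * b z) = phi P a * phi P b"
          by (rule phi_mult[OF G])
        show "\<And>c. phi P (\<lambda>z. c) = c" by (rule phi_const[OF G])
        show "\<And>m. m \<in> M \<Longrightarrow> phi P m \<ge> 0"
        proof -
          fix m assume "m \<in> M"
          hence "m \<in> P" using M_T TP by blast
          thus "phi P m \<ge> 0" by (rule phi_nonneg[OF G])
        qed
      qed
      moreover have "phi P (\<lambda>z. - g z) \<ge> 0"
        using phi_nonneg[OF G] E(3) P(2) by blast
      moreover have "phi P (\<lambda>z. - g z) = - phi P h + c"
      proof -
        have "(\<lambda>z. - g z) = (\<lambda>z. (-1) * h z + c)" by (auto simp: g_def)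
        moreover have "phi P (\<lambda>z. (-1) * h z + c) = phi P (\<lambda>z. (-1) * h z) + phi P (\<lambda>z. c)"
          by (rule phi_add[OF G A_scale[OF h] A_const])
        moreover have "phi P (\<lambda>z. (-1) * h z) = (-1) * phi P h" by (rule phi_scale[OF G h])
        ultimately show ?thesis using phi_const[OF G, of c] by simp
      qed
      ultimately show False using \<delta> by (simp add: c_def)
    next
      case True
      then obtain t1 t2 where t: "t1 \<in> T" "t2 \<in> T" and e: "(\<lambda>z. -1) = (\<lambda>z. t1 z + - g z * t2 z)"
        unfolding ext_def by blast
      have gt: "\<And>z. g z * t2 z = 1 + t1 z" using e by (simp add: fun_eq_iff) (smt (verit))
      obtain N0 where N0: "(\<lambda>z. N0 - t2 z) \<in> T" using T_arch[OF pre_A[OF PT t(2)]] by blast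
      define N where "N = max N0 1"
      have Npos: "N \<ge> 1" by (simp add: N_def)
      have NT: "(\<lambda>z. N - t2 z) \<in> T"
        using pre_add_const[OF PT N0, of "N - N0"] by (simp add: N_def)
      obtain N1 where N1: "(\<lambda>z. N1 - (- h z)) \<in> T" using T_arch[OF A_neg[OF h]] by blast
      have neR: "R \<noteq> {}"
      proof -
        have "- N1 \<in> R" using N1 by (simp add: R_def add.commute)
        thus ?thesis by auto
      qed
      have bdd: "bdd_above R" using R0 by (auto simp: bdd_above_def)
      define r0 where "r0 = Sup R"
      have r0le: "r0 \<le> 0" unfolding r0_def using R0 neR by (simp add: cSup_least)
      have "r0 - 1/(2*N) < Sup R" using Npos by (simp add: r0_def)
      then obtain r where rR: "r \<in> R" and rgt: "r > r0 - 1/(2*N)"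
        using less_cSup_iff[OF neR bdd] by auto
      define \<epsilon> where "\<epsilon> = (c - r0) + 1/(2*N)"
      have cpos: "c > 0" using \<delta> by (simp add: c_def)
      have epos: "\<epsilon> \<ge> 0" using r0le cpos Npos by (simp add: \<epsilon>_def)
      have g1: "(\<lambda>z. g z + \<epsilon>) \<in> T"
      proof -
        have "(\<lambda>z. h z - r) \<in> T" using rR by (simp add: R_def)
        from pre_add_const[OF PT this, of "r - c + \<epsilon>"] rgt
        show ?thesis by (simp add: g_def \<epsilon>_def)
      qed
      have "(\<lambda>z. (g z + \<epsilon>) * (N - t2 z) + t1 z + \<epsilon> * t2 z) \<in> T"
        by (rule pre_add[OF PT pre_add[OF PT pre_mult[OF PT g1 NT] t(1)] pre_scale[OF PT epos t(2)]])
      moreover have "(\<lambda>z. (g z + \<epsilon>) * (N - t2 z) + t1 z + \<epsilon> * t2 z) = (\<lambda>z. N * (g z + \<epsilon>) - 1)"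
      proof (rule ext)
        fix z
        show "(g z + \<epsilon>) * (N - t2 z) + t1 z + \<epsilon> * t2 z = N * (g z + \<epsilon>) - 1"
          using gt[of z] by (simp add: algebra_simps)
      qed
      ultimately have "(\<lambda>z. N * (g z + \<epsilon>) - 1) \<in> T" by simp
      from pre_scale[OF PT _ this, of "1/N"] Npos
      have "(\<lambda>z. h z - (c - \<epsilon> + 1/N)) \<in> T"
        by (simp add: g_def field_simps)
      hence "c - \<epsilon> + 1/N \<in> R" by (simp add: R_def)
      hence "c - \<epsilon> + 1/N \<le> r0" unfolding r0_def by (rule cSup_upper[OF _ bdd])
      moreover have "c - \<epsilon> + 1/N = r0 + 1/(2*N)" by (simp add: \<epsilon>_def field_simps)
      ultimately show False using Npos by simp
    qed
  qed
  then obtain r where r: "r \<in> R" "r > 0" by blast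
  hence "(\<lambda>z. h z - r + r) \<in> M" unfolding R_def T_def by auto
  thus "h \<in> M" by simp
qed

end

lemma monom_add: "monom (\<lambda>i. \<alpha> i + \<beta> i) x = monom \<alpha> x * monom \<beta> x"
  unfolding monom_def by (simp add: power_add prod.distrib)

lemma mono_deg_add: "mono_deg (\<lambda>i. \<alpha> i + \<beta> i) = mono_deg \<alpha> + mono_deg \<beta>"
  unfolding mono_deg_def by (simp add: sum.distrib)

lemma monom_zero: "monom (\<lambda>i. 0) x = 1" unfolding monom_def by simp
lemma mono_deg_zero: "mono_deg (\<lambda>i. 0) = 0" unfolding mono_deg_def by simp

lemma monom_unit: "monom (\<lambda>j. if j = i then 1 else 0) x = x $ i"
proof -
  have "monom (\<lambda>j. if j = i then 1 else 0) x = (\<Prod>j\<in>UNIV. if j = i then x $ j else 1)"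
    unfolding monom_def by (rule prod.cong) auto
  also have "\<dots> = x $ i" by (simp add: prod.delta)
  finally show ?thesis .
qed

lemma mono_deg_unit: "mono_deg (\<lambda>j::'i::finite. if j = i then 1 else 0) = 1"
  unfolding mono_deg_def by (simp add: sum.delta)

lemma poly2_le_sumI:
  fixes e :: "'a \<Rightarrow> ('n::finite \<Rightarrow> nat) \<times> ('p::finite \<Rightarrow> nat)" and h :: "real^'n \<Rightarrow> real^'p \<Rightarrow> real"
  assumes I: "finite I" and deg: "\<And>i. i \<in> I \<Longrightarrow> mono_deg (fst (e i)) + mono_deg (snd (e i)) \<le> k"
    and h: "\<And>x u. h x u = (\<Sum>i\<in>I. c i * monom (fst (e i)) x * monom (snd (e i)) u)"
  shows "poly2_le k h"
proof -
  define S where "S = e ` I"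
  define d where "d \<gamma> = (if \<gamma> \<in> S then (\<Sum>i\<in>{i\<in>I. e i = \<gamma>}. c i) else 0)" for \<gamma>
  have S: "finite S" using I by (simp add: S_def)
  have sup: "{\<gamma>. d \<gamma> \<noteq> 0} \<subseteq> S" by (auto simp: d_def split: if_splits)
  have hs: "h x u = (\<Sum>\<gamma>\<in>S. d \<gamma> * monom (fst \<gamma>) x * monom (snd \<gamma>) u)" for x u
  proof -
    have "h x u = (\<Sum>\<gamma>\<in>S. \<Sum>i\<in>{i\<in>I. e i = \<gamma>}. c i * monom (fst (e i)) x * monom (snd (e i)) u)"
      unfolding h S_def by (rule sum.image_gen[OF I])
    also have "\<dots> = (\<Sum>\<gamma>\<in>S. d \<gamma> * monom (fst \<gamma>) x * monom (snd \<gamma>) u)"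
    proof (rule sum.cong[OF refl])
      fix \<gamma> assume g: "\<gamma> \<in> S"
      have "(\<Sum>i\<in>{i\<in>I. e i = \<gamma>}. c i * monom (fst (e i)) x * monom (snd (e i)) u)
          = (\<Sum>i\<in>{i\<in>I. e i = \<gamma>}. c i * (monom (fst \<gamma>) x * monom (snd \<gamma>) u))"
        by (rule sum.cong) (auto simp: mult.assoc)
      also have "\<dots> = d \<gamma> * monom (fst \<gamma>) x * monom (snd \<gamma>) u"
        using g by (simp add: d_def sum_distrib_right mult.assoc)
      finally show "(\<Sum>i\<in>{i\<in>I. e i = \<gamma>}. c i * monom (fst (e i)) x * monom (snd (e i)) u)
          = d \<gamma> * monom (fst \<gamma>) x * monom (snd \<gamma>) u" .
    qed
    finally show ?thesis .
  qed
  show ?thesis unfolding poly2_le_def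
  proof (intro exI conjI allI impI)
    show "finite {\<gamma>. d \<gamma> \<noteq> 0}" using S sup finite_subset by blast
  next
    fix \<alpha> \<beta> assume "d (\<alpha>, \<beta>) \<noteq> 0"
    hence "(\<alpha>, \<beta>) \<in> S" using sup by blast
    then obtain i where "i \<in> I" "e i = (\<alpha>, \<beta>)" by (auto simp: S_def)
    thus "mono_deg \<alpha> + mono_deg \<beta> \<le> k" using deg[of i] by simp
  next
    fix x u
    show "h x u = (\<Sum>\<gamma>\<in>{\<gamma>. d \<gamma> \<noteq> 0}. d \<gamma> * monom (fst \<gamma>) x * monom (snd \<gamma>) u)"
      unfolding hs by (rule sum.mono_neutral_right[OF S sup]) auto
  qed
qed

lemma poly2_le_E:
  assumes "poly2_le k h"
  obtains S c where "finite S" "\<And>\<gamma>. \<gamma> \<in> S \<Longrightarrow> mono_deg (fst \<gamma>) + mono_deg (snd \<gamma>) \<le> k"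
    "\<And>x u. h x u = (\<Sum>\<gamma>\<in>S. c \<gamma> * monom (fst \<gamma>) x * monom (snd \<gamma>) u)"
proof -
  from assms obtain c where c: "finite {\<gamma>. c \<gamma> \<noteq> 0}"
    "\<forall>\<alpha> \<beta>. c (\<alpha>, \<beta>) \<noteq> 0 \<longrightarrow> mono_deg \<alpha> + mono_deg \<beta> \<le> k"
    "\<forall>x u. h x u = (\<Sum>\<gamma>\<in>{\<gamma>. c \<gamma> \<noteq> 0}. c \<gamma> * monom (fst \<gamma>) x * monom (snd \<gamma>) u)"
    unfolding poly2_le_def by blast
  have d: "mono_deg (fst \<gamma>) + mono_deg (snd \<gamma>) \<le> k" if "\<gamma> \<in> {\<gamma>. c \<gamma> \<noteq> 0}" for \<gamma>
    using c(2) that by (cases \<gamma>) auto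
  show ?thesis by (rule that[of "{\<gamma>. c \<gamma> \<noteq> 0}" c, OF c(1) d]) (use c(3) in blast)+
qed

lemma poly2_le_mono: "poly2_le k h \<Longrightarrow> k \<le> k' \<Longrightarrow> poly2_le k' h"
  unfolding poly2_le_def by (meson order_trans)

lemma poly2_const: "poly2_le 0 (\<lambda>x u. c)"
  by (rule poly2_le_sumI[of "{()}" "\<lambda>_. (\<lambda>i. 0, \<lambda>i. 0)" _ _ "\<lambda>_. c"])
     (auto simp: monom_zero mono_deg_zero)

lemma poly2_add:
  assumes "poly2_le k h1" "poly2_le k h2"
  shows "poly2_le k (\<lambda>x u. h1 x u + h2 x u)"
proof -
  obtain S1 c1 where 1: "finite S1" "\<And>\<gamma>. \<gamma> \<in> S1 \<Longrightarrow> mono_deg (fst \<gamma>) + mono_deg (snd \<gamma>) \<le> k"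
    "\<And>x u. h1 x u = (\<Sum>\<gamma>\<in>S1. c1 \<gamma> * monom (fst \<gamma>) x * monom (snd \<gamma>) u)"
    using poly2_le_E[OF assms(1)] by blast
  obtain S2 c2 where 2: "finite S2" "\<And>\<gamma>. \<gamma> \<in> S2 \<Longrightarrow> mono_deg (fst \<gamma>) + mono_deg (snd \<gamma>) \<le> k"
    "\<And>x u. h2 x u = (\<Sum>\<gamma>\<in>S2. c2 \<gamma> * monom (fst \<gamma>) x * monom (snd \<gamma>) u)"
    using poly2_le_E[OF assms(2)] by blast
  show ?thesis
  proof (rule poly2_le_sumI[of "S1 <+> S2" "case_sum id id" _ _ "case_sum c1 c2"])
    show "finite (S1 <+> S2)" using 1(1) 2(1) by simp
  next
    fix i assume "i \<in> S1 <+> S2"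
    thus "mono_deg (fst (case_sum id id i)) + mono_deg (snd (case_sum id id i)) \<le> k"
      using 1(2) 2(2) by auto
  next
    fix x u
    show "h1 x u + h2 x u = (\<Sum>i\<in>S1 <+> S2. case_sum c1 c2 i * monom (fst (case_sum id id i)) x * monom (snd (case_sum id id i)) u)"
      by (subst sum.Plus[OF 1(1) 2(1)]) (simp add: 1(3) 2(3) comp_def)
  qed
qed

lemma poly2_mult:
  assumes "poly2_le k1 h1" "poly2_le k2 h2"
  shows "poly2_le (k1 + k2) (\<lambda>x u. h1 x u * h2 x u)"
proof -
  obtain S1 c1 where 1: "finite S1" "\<And>\<gamma>. \<gamma> \<in> S1 \<Longrightarrow> mono_deg (fst \<gamma>) + mono_deg (snd \<gamma>) \<le> k1"
    "\<And>x u. h1 x u = (\<Sum>\<gamma>\<in>S1. c1 \<gamma> * monom (fst \<gamma>) x * monom (snd \<gamma>) u)"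
    using poly2_le_E[OF assms(1)] by blast
  obtain S2 c2 where 2: "finite S2" "\<And>\<gamma>. \<gamma> \<in> S2 \<Longrightarrow> mono_deg (fst \<gamma>) + mono_deg (snd \<gamma>) \<le> k2"
    "\<And>x u. h2 x u = (\<Sum>\<gamma>\<in>S2. c2 \<gamma> * monom (fst \<gamma>) x * monom (snd \<gamma>) u)"
    using poly2_le_E[OF assms(2)] by blast
  define e where "e = (\<lambda>(\<gamma>::('a \<Rightarrow> nat) \<times> ('b \<Rightarrow> nat), \<delta>::('a \<Rightarrow> nat) \<times> ('b \<Rightarrow> nat)).
     ((\<lambda>i. fst \<gamma> i + fst \<delta> i), (\<lambda>j. snd \<gamma> j + snd \<delta> j)))"
  show ?thesis
  proof (rule poly2_le_sumI[of "S1 \<times> S2" e _ _ "\<lambda>(\<gamma>, \<delta>). c1 \<gamma> * c2 \<delta>"])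
    show "finite (S1 \<times> S2)" using 1(1) 2(1) by simp
  next
    fix i assume i: "i \<in> S1 \<times> S2"
    obtain \<gamma> \<delta> where gd: "i = (\<gamma>, \<delta>)" by (cases i)
    have "\<gamma> \<in> S1" "\<delta> \<in> S2" using i gd by auto
    hence "mono_deg (fst \<gamma>) + mono_deg (snd \<gamma>) \<le> k1" "mono_deg (fst \<delta>) + mono_deg (snd \<delta>) \<le> k2"
      using 1(2) 2(2) by auto
    thus "mono_deg (fst (e i)) + mono_deg (snd (e i)) \<le> k1 + k2"
      by (simp add: gd e_def mono_deg_add)
  next
    fix x u
    have "h1 x u * h2 x u = (\<Sum>\<gamma>\<in>S1. \<Sum>\<delta>\<in>S2. (c1 \<gamma> * monom (fst \<gamma>) x * monom (snd \<gamma>) u) * (c2 \<delta> * monom (fst \<delta>) x * monom (snd \<delta>) u))"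
      unfolding 1(3) 2(3) by (rule sum_product)
    also have "\<dots> = (\<Sum>(\<gamma>, \<delta>)\<in>S1 \<times> S2. (c1 \<gamma> * monom (fst \<gamma>) x * monom (snd \<gamma>) u) * (c2 \<delta> * monom (fst \<delta>) x * monom (snd \<delta>) u))"
      by (rule sum.cartesian_product)
    also have "\<dots> = (\<Sum>i\<in>S1 \<times> S2. (\<lambda>(\<gamma>, \<delta>). c1 \<gamma> * c2 \<delta>) i * monom (fst (e i)) x * monom (snd (e i)) u)"
      by (rule sum.cong) (auto simp: e_def monom_add)
    finally show "h1 x u * h2 x u = (\<Sum>i\<in>S1 \<times> S2. (\<lambda>(\<gamma>, \<delta>). c1 \<gamma> * c2 \<delta>) i * monom (fst (e i)) x * monom (snd (e i)) u)" .
  qed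
qed

lemma poly2_xcoord: "poly2_le 1 (\<lambda>x u. x $ i)"
  by (rule poly2_le_sumI[of "{()}" "\<lambda>_. (\<lambda>j. if j = i then 1 else 0, \<lambda>j. 0)" _ _ "\<lambda>_. 1"])
     (auto simp: monom_zero mono_deg_zero monom_unit mono_deg_unit)

lemma poly2_ucoord: "poly2_le 1 (\<lambda>x u. u $ i)"
  by (rule poly2_le_sumI[of "{()}" "\<lambda>_. (\<lambda>j. 0, \<lambda>j. if j = i then 1 else 0)" _ _ "\<lambda>_. 1"])
     (auto simp: monom_zero mono_deg_zero monom_unit mono_deg_unit)

lemma poly_le_sumI:
  fixes e :: "'a \<Rightarrow> ('n::finite \<Rightarrow> nat)" and h :: "real^'n \<Rightarrow> real"
  assumes I: "finite I" and deg: "\<And>i. i \<in> I \<Longrightarrow> mono_deg (e i) \<le> k"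
    and h: "\<And>x. h x = (\<Sum>i\<in>I. c i * monom (e i) x)"
  shows "poly_le k h"
proof -
  define S where "S = e ` I"
  define d where "d \<gamma> = (if \<gamma> \<in> S then (\<Sum>i\<in>{i\<in>I. e i = \<gamma>}. c i) else 0)" for \<gamma>
  have S: "finite S" using I by (simp add: S_def)
  have sup: "{\<gamma>. d \<gamma> \<noteq> 0} \<subseteq> S" by (auto simp: d_def split: if_splits)
  have hs: "h x = (\<Sum>\<gamma>\<in>S. d \<gamma> * monom \<gamma> x)" for x
  proof -
    have "h x = (\<Sum>\<gamma>\<in>S. \<Sum>i\<in>{i\<in>I. e i = \<gamma>}. c i * monom (e i) x)"
      unfolding h S_def by (rule sum.image_gen[OF I])
    also have "\<dots> = (\<Sum>\<gamma>\<in>S. d \<gamma> * monom \<gamma> x)"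
    proof (rule sum.cong[OF refl])
      fix \<gamma> assume g: "\<gamma> \<in> S"
      have "(\<Sum>i\<in>{i\<in>I. e i = \<gamma>}. c i * monom (e i) x) = (\<Sum>i\<in>{i\<in>I. e i = \<gamma>}. c i * monom \<gamma> x)"
        by (rule sum.cong) auto
      also have "\<dots> = d \<gamma> * monom \<gamma> x" using g by (simp add: d_def sum_distrib_right)
      finally show "(\<Sum>i\<in>{i\<in>I. e i = \<gamma>}. c i * monom (e i) x) = d \<gamma> * monom \<gamma> x" .
    qed
    finally show ?thesis .
  qed
  show ?thesis unfolding poly_le_def
  proof (intro exI conjI allI impI)
    show "finite {\<gamma>. d \<gamma> \<noteq> 0}" using S sup finite_subset by blast
  next
    fix \<alpha> assume "d \<alpha> \<noteq> 0"
    hence "\<alpha> \<in> S" using sup by blast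
    then obtain i where "i \<in> I" "e i = \<alpha>" by (auto simp: S_def)
    thus "mono_deg \<alpha> \<le> k" using deg[of i] by simp
  next
    fix x
    show "h x = (\<Sum>\<gamma>\<in>{\<gamma>. d \<gamma> \<noteq> 0}. d \<gamma> * monom \<gamma> x)"
      unfolding hs by (rule sum.mono_neutral_right[OF S sup]) auto
  qed
qed

lemma poly_le_E:
  assumes "poly_le k h"
  obtains S c where "finite S" "\<And>\<gamma>. \<gamma> \<in> S \<Longrightarrow> mono_deg \<gamma> \<le> k"
    "\<And>x. h x = (\<Sum>\<gamma>\<in>S. c \<gamma> * monom \<gamma> x)"
proof -
  from assms obtain c where c: "finite {\<gamma>. c \<gamma> \<noteq> 0}"
    "\<forall>\<alpha>. c \<alpha> \<noteq> 0 \<longrightarrow> mono_deg \<alpha> \<le> k"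
    "\<forall>x. h x = (\<Sum>\<gamma>\<in>{\<gamma>. c \<gamma> \<noteq> 0}. c \<gamma> * monom \<gamma> x)"
    unfolding poly_le_def by blast
  have d: "mono_deg \<gamma> \<le> k" if "\<gamma> \<in> {\<gamma>. c \<gamma> \<noteq> 0}" for \<gamma> using c(2) that by auto
  show ?thesis by (rule that[of "{\<gamma>. c \<gamma> \<noteq> 0}" c, OF c(1) d]) (use c(3) in blast)+
qed

lemma poly_le_mono: "poly_le k h \<Longrightarrow> k \<le> k' \<Longrightarrow> poly_le k' h"
  unfolding poly_le_def by (meson order_trans)

lemma poly_const: "poly_le 0 (\<lambda>x. c)"
  by (rule poly_le_sumI[of "{()}" "\<lambda>_. (\<lambda>i. 0)" _ _ "\<lambda>_. c"]) (auto simp: monom_zero mono_deg_zero)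

lemma poly_add:
  assumes "poly_le k h1" "poly_le k h2"
  shows "poly_le k (\<lambda>x. h1 x + h2 x)"
proof -
  obtain S1 c1 where 1: "finite S1" "\<And>\<gamma>. \<gamma> \<in> S1 \<Longrightarrow> mono_deg \<gamma> \<le> k"
    "\<And>x. h1 x = (\<Sum>\<gamma>\<in>S1. c1 \<gamma> * monom \<gamma> x)"
    using poly_le_E[OF assms(1)] by blast
  obtain S2 c2 where 2: "finite S2" "\<And>\<gamma>. \<gamma> \<in> S2 \<Longrightarrow> mono_deg \<gamma> \<le> k"
    "\<And>x. h2 x = (\<Sum>\<gamma>\<in>S2. c2 \<gamma> * monom \<gamma> x)"
    using poly_le_E[OF assms(2)] by blast
  show ?thesis
  proof (rule poly_le_sumI[of "S1 <+> S2" "case_sum id id" _ _ "case_sum c1 c2"])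
    show "finite (S1 <+> S2)" using 1(1) 2(1) by simp
  next
    fix i assume "i \<in> S1 <+> S2"
    thus "mono_deg (case_sum id id i) \<le> k" using 1(2) 2(2) by auto
  next
    fix x
    show "h1 x + h2 x = (\<Sum>i\<in>S1 <+> S2. case_sum c1 c2 i * monom (case_sum id id i) x)"
      by (subst sum.Plus[OF 1(1) 2(1)]) (simp add: 1(3) 2(3) comp_def)
  qed
qed

lemma poly_mult:
  assumes "poly_le k1 h1" "poly_le k2 h2"
  shows "poly_le (k1 + k2) (\<lambda>x. h1 x * h2 x)"
proof -
  obtain S1 c1 where 1: "finite S1" "\<And>\<gamma>. \<gamma> \<in> S1 \<Longrightarrow> mono_deg \<gamma> \<le> k1"
    "\<And>x. h1 x = (\<Sum>\<gamma>\<in>S1. c1 \<gamma> * monom \<gamma> x)"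
    using poly_le_E[OF assms(1)] by blast
  obtain S2 c2 where 2: "finite S2" "\<And>\<gamma>. \<gamma> \<in> S2 \<Longrightarrow> mono_deg \<gamma> \<le> k2"
    "\<And>x. h2 x = (\<Sum>\<gamma>\<in>S2. c2 \<gamma> * monom \<gamma> x)"
    using poly_le_E[OF assms(2)] by blast
  define e where "e = (\<lambda>(\<gamma>::'a \<Rightarrow> nat, \<delta>::'a \<Rightarrow> nat). (\<lambda>i. \<gamma> i + \<delta> i))"
  show ?thesis
  proof (rule poly_le_sumI[of "S1 \<times> S2" e _ _ "\<lambda>(\<gamma>, \<delta>). c1 \<gamma> * c2 \<delta>"])
    show "finite (S1 \<times> S2)" using 1(1) 2(1) by simp
  next
    fix i assume i: "i \<in> S1 \<times> S2"
    obtain \<gamma> \<delta> where gd: "i = (\<gamma>, \<delta>)" by (cases i)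
    have "\<gamma> \<in> S1" "\<delta> \<in> S2" using i gd by auto
    hence "mono_deg \<gamma> \<le> k1" "mono_deg \<delta> \<le> k2" using 1(2) 2(2) by auto
    thus "mono_deg (e i) \<le> k1 + k2" by (simp add: gd e_def mono_deg_add)
  next
    fix x
    have "h1 x * h2 x = (\<Sum>\<gamma>\<in>S1. \<Sum>\<delta>\<in>S2. (c1 \<gamma> * monom \<gamma> x) * (c2 \<delta> * monom \<delta> x))"
      unfolding 1(3) 2(3) by (rule sum_product)
    also have "\<dots> = (\<Sum>(\<gamma>, \<delta>)\<in>S1 \<times> S2. (c1 \<gamma> * monom \<gamma> x) * (c2 \<delta> * monom \<delta> x))"
      by (rule sum.cartesian_product)
    also have "\<dots> = (\<Sum>i\<in>S1 \<times> S2. (\<lambda>(\<gamma>, \<delta>). c1 \<gamma> * c2 \<delta>) i * monom (e i) x)"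
      by (rule sum.cong) (auto simp: e_def monom_add)
    finally show "h1 x * h2 x = (\<Sum>i\<in>S1 \<times> S2. (\<lambda>(\<gamma>, \<delta>). c1 \<gamma> * c2 \<delta>) i * monom (e i) x)" .
  qed
qed

lemma poly_coord: "poly_le 1 (\<lambda>x. x $ i)"
  by (rule poly_le_sumI[of "{()}" "\<lambda>_. (\<lambda>j. if j = i then 1 else 0)" _ _ "\<lambda>_. 1"])
     (auto simp: monom_unit mono_deg_unit)

lemma poly_lift_x:
  assumes "poly_le k g" shows "poly2_le k (\<lambda>x (u::real^'p::finite). g x)"
proof -
  obtain S c where 1: "finite S" "\<And>\<gamma>. \<gamma> \<in> S \<Longrightarrow> mono_deg \<gamma> \<le> k" "\<And>x. g x = (\<Sum>\<gamma>\<in>S. c \<gamma> * monom \<gamma> x)"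
    using poly_le_E[OF assms] by blast
  show ?thesis
    by (rule poly2_le_sumI[of S "\<lambda>\<gamma>. (\<gamma>, \<lambda>j. 0)" _ _ c]) (auto simp: 1 monom_zero mono_deg_zero)
qed

lemma poly_lift_u:
  assumes "poly_le k g" shows "poly2_le k (\<lambda>(x::real^'n::finite) u. g u)"
proof -
  obtain S c where 1: "finite S" "\<And>\<gamma>. \<gamma> \<in> S \<Longrightarrow> mono_deg \<gamma> \<le> k" "\<And>x. g x = (\<Sum>\<gamma>\<in>S. c \<gamma> * monom \<gamma> x)"
    using poly_le_E[OF assms] by blast
  show ?thesis
    by (rule poly2_le_sumI[of S "\<lambda>\<gamma>. (\<lambda>j. 0, \<gamma>)" _ _ c]) (auto simp: 1 monom_zero mono_deg_zero)
qed

section \<open>Sums of squares and the quadratic module\<close>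

lemma sos2_poly: "sos2_le k s \<Longrightarrow> poly2_le (2*k) s"
proof -
  assume "sos2_le k s"
  then obtain qs where q: "\<forall>q\<in>set qs. poly2_le k q" "\<forall>x u. s x u = (\<Sum>q\<leftarrow>qs. (q x u)^2)"
    unfolding sos2_le_def by blast
  have "poly2_le (2*k) (\<lambda>x u. \<Sum>q\<leftarrow>qs. (q x u)^2)" using q(1)
  proof (induction qs)
    case Nil
    then show ?case using poly2_le_mono[OF poly2_const[of 0]] by simp
  next
    case (Cons a qs)
    have a: "poly2_le (2*k) (\<lambda>x u. (a x u)^2)"
      using poly2_mult[of k a k a] Cons.prems by (simp add: power2_eq_square mult_2)
    show ?case using poly2_add[OF a Cons.IH] Cons.prems by simp
  qed
  moreover have "s = (\<lambda>x u. \<Sum>q\<leftarrow>qs. (q x u)^2)" using q(2) by (auto simp: fun_eq_iff)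
  ultimately show ?thesis by simp
qed

lemma sos2_mono: "sos2_le k s \<Longrightarrow> k \<le> k' \<Longrightarrow> sos2_le k' s"
  unfolding sos2_le_def by (meson poly2_le_mono)

lemma sos2_zero: "sos2_le k (\<lambda>x u. 0)"
  unfolding sos2_le_def by (rule exI[of _ "[]"]) simp

lemma sos2_add: "sos2_le k s \<Longrightarrow> sos2_le k t \<Longrightarrow> sos2_le k (\<lambda>x u. s x u + t x u)"
  unfolding sos2_le_def
proof (elim exE conjE)
  fix qs rs assume "\<forall>q\<in>set qs. poly2_le k q" "\<forall>x u. s x u = (\<Sum>q\<leftarrow>qs. (q x u)^2)"
    "\<forall>q\<in>set rs. poly2_le k q" "\<forall>x u. t x u = (\<Sum>q\<leftarrow>rs. (q x u)^2)"
  thus "\<exists>qs. (\<forall>q\<in>set qs. poly2_le k q) \<and> (\<forall>x u. s x u + t x u = (\<Sum>q\<leftarrow>qs. (q x u)\<^sup>2))"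
    by (intro exI[of _ "qs @ rs"]) auto
qed

lemma sos2_sq: "poly2_le k q \<Longrightarrow> sos2_le k (\<lambda>x u. (q x u)^2)"
  unfolding sos2_le_def by (rule exI[of _ "[q]"]) simp

lemma sos2_sqmult: "poly2_le j a \<Longrightarrow> sos2_le k s \<Longrightarrow> sos2_le (j + k) (\<lambda>x u. (a x u)^2 * s x u)"
  unfolding sos2_le_def
proof (elim exE conjE)
  fix qs assume a: "poly2_le j a" and q: "\<forall>q\<in>set qs. poly2_le k q" "\<forall>x u. s x u = (\<Sum>q\<leftarrow>qs. (q x u)^2)"
  show "\<exists>qs. (\<forall>q\<in>set qs. poly2_le (j + k) q) \<and> (\<forall>x u. (a x u)\<^sup>2 * s x u = (\<Sum>q\<leftarrow>qs. (q x u)\<^sup>2))"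
  proof (intro exI[of _ "map (\<lambda>q x u. a x u * q x u) qs"] conjI allI)
    show "\<forall>q\<in>set (map (\<lambda>q x u. a x u * q x u) qs). poly2_le (j + k) q"
      using q(1) poly2_mult[OF a] by auto
    fix x u
    show "(a x u)\<^sup>2 * s x u = (\<Sum>q\<leftarrow>map (\<lambda>q x u. a x u * q x u) qs. (q x u)\<^sup>2)"
      unfolding q(2)[rule_format] by (induction qs) (auto simp: power_mult_distrib algebra_simps)
  qed
qed

lemma sos2_nonneg: "sos2_le k s \<Longrightarrow> s x u \<ge> 0"
  unfolding sos2_le_def by (auto intro!: sum_list_nonneg)

lemma is_sos2_nonneg: "is_sos2 s \<Longrightarrow> s x u \<ge> 0"
  unfolding is_sos2_def using sos2_nonneg by blast

lemma is_poly2_const: "is_poly2 (\<lambda>x u. c)" unfolding is_poly2_def using poly2_const by blast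
lemma is_poly2_add: "is_poly2 a \<Longrightarrow> is_poly2 b \<Longrightarrow> is_poly2 (\<lambda>x u. a x u + b x u)"
  unfolding is_poly2_def
proof (elim exE)
  fix k1 k2 assume "poly2_le k1 a" "poly2_le k2 b"
  hence "poly2_le (k1 + k2) a" "poly2_le (k1 + k2) b" using poly2_le_mono by fastforce+
  thus "\<exists>k. poly2_le k (\<lambda>x u. a x u + b x u)" using poly2_add by blast
qed
lemma is_poly2_mult: "is_poly2 a \<Longrightarrow> is_poly2 b \<Longrightarrow> is_poly2 (\<lambda>x u. a x u * b x u)"
  unfolding is_poly2_def using poly2_mult by blast
lemma is_sos2_poly: "is_sos2 s \<Longrightarrow> is_poly2 s" unfolding is_sos2_def is_poly2_def using sos2_poly by blast
lemma is_sos2_add: "is_sos2 s \<Longrightarrow> is_sos2 t \<Longrightarrow> is_sos2 (\<lambda>x u. s x u + t x u)"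
  unfolding is_sos2_def
proof (elim exE)
  fix k1 k2 assume "sos2_le k1 s" "sos2_le k2 t"
  hence "sos2_le (k1 + k2) s" "sos2_le (k1 + k2) t" using sos2_mono by fastforce+
  thus "\<exists>k. sos2_le k (\<lambda>x u. s x u + t x u)" using sos2_add by blast
qed
lemma is_sos2_sqmult: "is_poly2 a \<Longrightarrow> is_sos2 s \<Longrightarrow> is_sos2 (\<lambda>x u. (a x u)^2 * s x u)"
  unfolding is_sos2_def is_poly2_def using sos2_sqmult by blast
lemma is_sos2_sq: "is_poly2 a \<Longrightarrow> is_sos2 (\<lambda>x u. (a x u)^2)"
  unfolding is_sos2_def is_poly2_def using sos2_sq by blast
lemma is_sos2_zero: "is_sos2 (\<lambda>x u. 0)" unfolding is_sos2_def using sos2_zero by blast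
lemma is_sos2_one: "is_sos2 (\<lambda>x u. 1)"
  using is_sos2_sq[OF is_poly2_const[of 1]] by simp

lemma qm_I:
  assumes "is_sos2 s0" "\<forall>l<m1. is_sos2 (s1 l)" "\<forall>l<m2. is_sos2 (s2 l)"
    "\<And>x u. h x u = s0 x u + (\<Sum>l<m1. s1 l x u * g1 l x) + (\<Sum>l<m2. s2 l x u * g2 l u)"
  shows "h \<in> qmodule g1 m1 g2 m2"
  unfolding qmodule_def using assms by blast

lemma qm_E:
  assumes "h \<in> qmodule g1 m1 g2 m2"
  obtains s0 s1 s2 where "is_sos2 s0" "\<forall>l<m1. is_sos2 (s1 l)" "\<forall>l<m2. is_sos2 (s2 l)"
    "\<And>x u. h x u = s0 x u + (\<Sum>l<m1. s1 l x u * g1 l x) + (\<Sum>l<m2. s2 l x u * g2 l u)"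
  using assms unfolding qmodule_def by blast

lemma qm_add:
  assumes a: "a \<in> qmodule g1 m1 g2 m2" and b: "b \<in> qmodule g1 m1 g2 m2"
  shows "(\<lambda>x u. a x u + b x u) \<in> qmodule g1 m1 g2 m2"
proof -
  obtain s0 s1 s2 where s: "is_sos2 s0" "\<forall>l<m1. is_sos2 (s1 l)" "\<forall>l<m2. is_sos2 (s2 l)"
    "\<And>x u. a x u = s0 x u + (\<Sum>l<m1. s1 l x u * g1 l x) + (\<Sum>l<m2. s2 l x u * g2 l u)"
    using qm_E[OF a] by blast
  obtain t0 t1 t2 where t: "is_sos2 t0" "\<forall>l<m1. is_sos2 (t1 l)" "\<forall>l<m2. is_sos2 (t2 l)"
    "\<And>x u. b x u = t0 x u + (\<Sum>l<m1. t1 l x u * g1 l x) + (\<Sum>l<m2. t2 l x u * g2 l u)"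
    using qm_E[OF b] by blast
  show ?thesis
  proof (rule qm_I[of "\<lambda>x u. s0 x u + t0 x u" _ "\<lambda>l x u. s1 l x u + t1 l x u" _ "\<lambda>l x u. s2 l x u + t2 l x u"])
    show "is_sos2 (\<lambda>x u. s0 x u + t0 x u)" by (rule is_sos2_add[OF s(1) t(1)])
    show "\<forall>l<m1. is_sos2 (\<lambda>x u. s1 l x u + t1 l x u)" using s(2) t(2) is_sos2_add by blast
    show "\<forall>l<m2. is_sos2 (\<lambda>x u. s2 l x u + t2 l x u)" using s(3) t(3) is_sos2_add by blast
    fix x u
    show "a x u + b x u = s0 x u + t0 x u + (\<Sum>l<m1. (s1 l x u + t1 l x u) * g1 l x) + (\<Sum>l<m2. (s2 l x u + t2 l x u) * g2 l u)"
      unfolding s(4) t(4) by (simp add: distrib_right sum.distrib)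
  qed
qed

lemma qm_sqmult:
  assumes p: "is_poly2 p" and a: "a \<in> qmodule g1 m1 g2 m2"
  shows "(\<lambda>x u. (p x u)^2 * a x u) \<in> qmodule g1 m1 g2 m2"
proof -
  obtain s0 s1 s2 where s: "is_sos2 s0" "\<forall>l<m1. is_sos2 (s1 l)" "\<forall>l<m2. is_sos2 (s2 l)"
    "\<And>x u. a x u = s0 x u + (\<Sum>l<m1. s1 l x u * g1 l x) + (\<Sum>l<m2. s2 l x u * g2 l u)"
    using qm_E[OF a] by blast
  show ?thesis
  proof (rule qm_I[of "\<lambda>x u. (p x u)^2 * s0 x u" _ "\<lambda>l x u. (p x u)^2 * s1 l x u" _ "\<lambda>l x u. (p x u)^2 * s2 l x u"])
    show "is_sos2 (\<lambda>x u. (p x u)^2 * s0 x u)" by (rule is_sos2_sqmult[OF p s(1)])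
    show "\<forall>l<m1. is_sos2 (\<lambda>x u. (p x u)^2 * s1 l x u)" using s(2) is_sos2_sqmult[OF p] by blast
    show "\<forall>l<m2. is_sos2 (\<lambda>x u. (p x u)^2 * s2 l x u)" using s(3) is_sos2_sqmult[OF p] by blast
    fix x u
    show "(p x u)^2 * a x u = (p x u)^2 * s0 x u + (\<Sum>l<m1. (p x u)^2 * s1 l x u * g1 l x) + (\<Sum>l<m2. (p x u)^2 * s2 l x u * g2 l u)"
      unfolding s(4) by (simp add: distrib_left sum_distrib_left mult.assoc)
  qed
qed

lemma qm_sos:
  assumes "is_sos2 s" shows "s \<in> qmodule g1 m1 g2 m2"
  by (rule qm_I[of s _ "\<lambda>l x u. 0" _ "\<lambda>l x u. 0"]) (use assms is_sos2_zero in auto)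

lemma qm_g1:
  assumes l: "l < m1" shows "(\<lambda>x u. g1 l x) \<in> qmodule g1 m1 g2 m2"
proof (rule qm_I[of "\<lambda>x u. 0" _ "\<lambda>l' x u. if l' = l then 1 else 0" _ "\<lambda>l x u. 0"])
  show "is_sos2 (\<lambda>x u. 0)" by (rule is_sos2_zero)
  show "\<forall>l'<m1. is_sos2 (\<lambda>x u. if l' = l then 1 else 0)" using is_sos2_zero is_sos2_one by auto
  show "\<forall>l<m2. is_sos2 (\<lambda>x u. 0)" using is_sos2_zero by auto
  fix x u show "g1 l x = 0 + (\<Sum>l'<m1. (if l' = l then 1 else 0) * g1 l' x) + (\<Sum>l<m2. 0 * g2 l u)"
  proof -
    have "(\<Sum>l'<m1. (if l' = l then 1 else 0) * g1 l' x) = (\<Sum>l'<m1. if l' = l then g1 l' x else 0)"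
      by (rule sum.cong) auto
    thus ?thesis using l by (simp add: sum.delta)
  qed
qed

lemma qm_g2:
  assumes l: "l < m2" shows "(\<lambda>x u. g2 l u) \<in> qmodule g1 m1 g2 m2"
proof (rule qm_I[of "\<lambda>x u. 0" _ "\<lambda>l x u. 0" _ "\<lambda>l' x u. if l' = l then 1 else 0"])
  show "is_sos2 (\<lambda>x u. 0)" by (rule is_sos2_zero)
  show "\<forall>l'<m2. is_sos2 (\<lambda>x u. if l' = l then 1 else 0)" using is_sos2_zero is_sos2_one by auto
  show "\<forall>l<m1. is_sos2 (\<lambda>x u. 0)" using is_sos2_zero by auto
  fix x u show "g2 l u = 0 + (\<Sum>l<m1. 0 * g1 l x) + (\<Sum>l'<m2. (if l' = l then 1 else 0) * g2 l' u)"
  proof -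
    have "(\<Sum>l'<m2. (if l' = l then 1 else 0) * g2 l' u) = (\<Sum>l'<m2. if l' = l then g2 l' u else 0)"
      by (rule sum.cong) auto
    thus ?thesis using l by (simp add: sum.delta)
  qed
qed

lemma qm_nonneg:
  assumes h: "h \<in> qmodule g1 m1 g2 m2" and x: "x \<in> semialg g1 m1" and u: "u \<in> semialg g2 m2"
  shows "h x u \<ge> 0"
proof -
  obtain s0 s1 s2 where s: "is_sos2 s0" "\<forall>l<m1. is_sos2 (s1 l)" "\<forall>l<m2. is_sos2 (s2 l)"
    "\<And>x u. h x u = s0 x u + (\<Sum>l<m1. s1 l x u * g1 l x) + (\<Sum>l<m2. s2 l x u * g2 l u)"
    using qm_E[OF h] by blast
  have h1: "0 \<le> s1 l x u * g1 l x" if "l \<in> {..<m1}" for l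
    using is_sos2_nonneg[of "s1 l" x u] s(2) that x by (auto simp: semialg_def intro: mult_nonneg_nonneg)
  have S1: "0 \<le> (\<Sum>l<m1. s1 l x u * g1 l x)" by (rule sum_nonneg[OF h1])
  have h2: "0 \<le> s2 l x u * g2 l u" if "l \<in> {..<m2}" for l
    using is_sos2_nonneg[of "s2 l" x u] s(3) that u by (auto simp: semialg_def intro: mult_nonneg_nonneg)
  have S2: "0 \<le> (\<Sum>l<m2. s2 l x u * g2 l u)" by (rule sum_nonneg[OF h2])
  show ?thesis using s(4)[of x u] is_sos2_nonneg[OF s(1), of x u] S1 S2 by linarith
qed

lemma is_poly2_sum: "finite S \<Longrightarrow> (\<forall>l\<in>S. is_poly2 (f l)) \<Longrightarrow> is_poly2 (\<lambda>x u. \<Sum>l\<in>S. f l x u)"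
proof (induction S rule: finite_induct)
  case empty then show ?case using is_poly2_const[of 0] by simp
next
  case (insert a F)
  then show ?case using is_poly2_add[of "f a" "\<lambda>x u. \<Sum>l\<in>F. f l x u"] by simp
qed

lemma qm_poly:
  assumes g1p: "\<forall>l<m1. is_poly (g1 l)" and g2p: "\<forall>l<m2. is_poly (g2 l)"
    and h: "h \<in> qmodule g1 m1 g2 m2"
  shows "is_poly2 h"
proof -
  obtain s0 s1 s2 where s: "is_sos2 s0" "\<forall>l<m1. is_sos2 (s1 l)" "\<forall>l<m2. is_sos2 (s2 l)"
    "\<And>x u. h x u = s0 x u + (\<Sum>l<m1. s1 l x u * g1 l x) + (\<Sum>l<m2. s2 l x u * g2 l u)"
    using qm_E[OF h] by blast
  have 1: "is_poly2 (\<lambda>x u. \<Sum>l\<in>{..<m1}. s1 l x u * g1 l x)"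
  proof (rule is_poly2_sum[OF finite_lessThan], rule ballI)
    fix l assume "l \<in> {..<m1}" hence "l < m1" by simp
    moreover have "is_poly2 (\<lambda>x u. g1 l x)" if "l < m1"
      using g1p that poly_lift_x unfolding is_poly_def is_poly2_def by blast
    ultimately show "is_poly2 (\<lambda>x u. s1 l x u * g1 l x)" using s(2) is_sos2_poly is_poly2_mult by blast
  qed
  have 2: "is_poly2 (\<lambda>x u. \<Sum>l\<in>{..<m2}. s2 l x u * g2 l u)"
  proof (rule is_poly2_sum[OF finite_lessThan], rule ballI)
    fix l assume "l \<in> {..<m2}" hence "l < m2" by simp
    moreover have "is_poly2 (\<lambda>x u. g2 l u)" if "l < m2"
      using g2p that poly_lift_u unfolding is_poly_def is_poly2_def by blast
    ultimately show "is_poly2 (\<lambda>x u. s2 l x u * g2 l u)" using s(3) is_sos2_poly is_poly2_mult by blast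
  qed
  have "h = (\<lambda>x u. s0 x u + (\<Sum>l<m1. s1 l x u * g1 l x) + (\<Sum>l<m2. s2 l x u * g2 l u))"
    using s(4) by (auto simp: fun_eq_iff)
  thus ?thesis using is_poly2_add[OF is_poly2_add[OF is_sos2_poly[OF s(1)] 1] 2] by simp
qed

section \<open>Closure principle for polynomial functions\<close>

lemma closed_sum:
  assumes add: "\<forall>a\<in>B. \<forall>b\<in>B. (\<lambda>z. a z + b z) \<in> B" and z: "(\<lambda>z. 0) \<in> B"
  shows "finite S \<Longrightarrow> (\<forall>i\<in>S. f i \<in> B) \<Longrightarrow> (\<lambda>z. \<Sum>i\<in>S. f i z) \<in> B"
proof (induction S rule: finite_induct)
  case empty thus ?case using z by simp
next
  case (insert a F) thus ?case using add by simp
qed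

lemma closed_prod:
  assumes mult: "\<forall>a\<in>B. \<forall>b\<in>B. (\<lambda>z. a z * b z) \<in> B" and o: "(\<lambda>z. 1) \<in> B"
  shows "finite S \<Longrightarrow> (\<forall>i\<in>S. f i \<in> B) \<Longrightarrow> (\<lambda>z. \<Prod>i\<in>S. f i z) \<in> B"
proof (induction S rule: finite_induct)
  case empty thus ?case using o by simp
next
  case (insert a F) thus ?case using mult by simp
qed

lemma closed_pow:
  assumes mult: "\<forall>a\<in>B. \<forall>b\<in>B. (\<lambda>z. a z * b z) \<in> B" and o: "(\<lambda>z. 1) \<in> B"
    and a: "a \<in> B"
  shows "(\<lambda>z. a z ^ n) \<in> B"
proof (induction n)
  case 0 thus ?case using o by simp
next
  case (Suc n)
  show ?case using bspec[OF bspec[OF mult a] Suc.IH] by simp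
qed

lemma poly_closed:
  fixes B :: "((real^'n::finite) \<times> (real^'p::finite) \<Rightarrow> real) set"
  assumes c: "\<And>c. (\<lambda>z. c) \<in> B"
    and add: "\<And>a b. a \<in> B \<Longrightarrow> b \<in> B \<Longrightarrow> (\<lambda>z. a z + b z) \<in> B"
    and mult: "\<And>a b. a \<in> B \<Longrightarrow> b \<in> B \<Longrightarrow> (\<lambda>z. a z * b z) \<in> B"
    and xc: "\<And>i. (\<lambda>z. fst z $ i) \<in> B" and uc: "\<And>j. (\<lambda>z. snd z $ j) \<in> B"
    and h: "is_poly2 h"
  shows "(\<lambda>z. h (fst z) (snd z)) \<in> B"
proof -
  obtain k where k: "poly2_le k h" using h unfolding is_poly2_def by blast
  have mult': "\<forall>a\<in>B. \<forall>b\<in>B. (\<lambda>z. a z * b z) \<in> B" using mult by blast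
  have add': "\<forall>a\<in>B. \<forall>b\<in>B. (\<lambda>z. a z + b z) \<in> B" using add by blast
  have "\<exists>S cf. finite S \<and> (\<forall>x u. h x u = (\<Sum>\<gamma>\<in>S. cf \<gamma> * monom (fst \<gamma>) x * monom (snd \<gamma>) u))"
    using k unfolding poly2_le_def by blast
  then obtain S cf where S: "finite S" "\<forall>x u. h x u = (\<Sum>\<gamma>\<in>S. cf \<gamma> * monom (fst \<gamma>) x * monom (snd \<gamma>) u)"
    by (elim exE conjE)
  have mx: "(\<lambda>z. monom \<alpha> (fst z)) \<in> B" for \<alpha> :: "'n \<Rightarrow> nat"
  proof -
    have "(\<lambda>z. \<Prod>i\<in>UNIV. (\<lambda>i z. fst z $ i ^ \<alpha> i) i z) \<in> B"
      by (rule closed_prod[OF mult' c finite_class.finite_UNIV]) (intro ballI closed_pow[OF mult' c xc])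
    thus ?thesis unfolding monom_def by simp
  qed
  have mu: "(\<lambda>z. monom \<beta> (snd z)) \<in> B" for \<beta> :: "'p \<Rightarrow> nat"
  proof -
    have "(\<lambda>z. \<Prod>i\<in>UNIV. (\<lambda>i z. snd z $ i ^ \<beta> i) i z) \<in> B"
      by (rule closed_prod[OF mult' c finite_class.finite_UNIV]) (intro ballI closed_pow[OF mult' c uc])
    thus ?thesis unfolding monom_def by simp
  qed
  have "(\<lambda>z. \<Sum>\<gamma>\<in>S. (\<lambda>\<gamma> z. cf \<gamma> * monom (fst \<gamma>) (fst z) * monom (snd \<gamma>) (snd z)) \<gamma> z) \<in> B"
    by (rule closed_sum[OF add' c S(1)]) (intro ballI mult[OF mult[OF c mx] mu])
  thus ?thesis using S(2) by simp
qed

lemma norm_sq_vec: "(norm (x::real^'n::finite))^2 = (\<Sum>i\<in>UNIV. (x $ i)^2)"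
  unfolding norm_vec_def L2_set_def by (simp add: sum_nonneg)

locale setting =
  fixes g1 :: "nat \<Rightarrow> real^'n::finite \<Rightarrow> real" and m1 :: nat
    and g2 :: "nat \<Rightarrow> real^'p::finite \<Rightarrow> real" and m2 :: nat
  assumes g1p: "\<forall>l<m1. is_poly (g1 l)" and g2p: "\<forall>l<m2. is_poly (g2 l)"
    and ne: "semialg g1 m1 \<times> semialg g2 m2 \<noteq> {}"
    and arch: "archimedean_qm g1 m1 g2 m2"
begin

definition AA :: "((real^'n) \<times> (real^'p) \<Rightarrow> real) set" where
  "AA = {h. is_poly2 (\<lambda>x u. h (x, u))}"
definition MM :: "((real^'n) \<times> (real^'p) \<Rightarrow> real) set" where
  "MM = {h. (\<lambda>x u. h (x, u)) \<in> qmodule g1 m1 g2 m2}"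

lemma AA_const: "(\<lambda>z. c) \<in> AA" unfolding AA_def by (simp add: is_poly2_const)
lemma AA_add: "a \<in> AA \<Longrightarrow> b \<in> AA \<Longrightarrow> (\<lambda>z. a z + b z) \<in> AA"
  unfolding AA_def using is_poly2_add by fastforce
lemma AA_mult: "a \<in> AA \<Longrightarrow> b \<in> AA \<Longrightarrow> (\<lambda>z. a z * b z) \<in> AA"
  unfolding AA_def using is_poly2_mult by fastforce
lemma AA_uncurry: "is_poly2 h \<Longrightarrow> (\<lambda>z. h (fst z) (snd z)) \<in> AA"
  unfolding AA_def by simp
lemma AA_x: "(\<lambda>z. fst z $ i) \<in> AA" unfolding AA_def is_poly2_def using poly2_xcoord by auto
lemma AA_u: "(\<lambda>z. snd z $ i) \<in> AA" unfolding AA_def is_poly2_def using poly2_ucoord by auto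

lemma MM_A: "m \<in> MM \<Longrightarrow> m \<in> AA"
  unfolding MM_def AA_def using qm_poly[OF g1p g2p] by blast
lemma MM_add: "a \<in> MM \<Longrightarrow> b \<in> MM \<Longrightarrow> (\<lambda>z. a z + b z) \<in> MM"
  unfolding MM_def using qm_add by fastforce
lemma MM_sqmult: "a \<in> AA \<Longrightarrow> m \<in> MM \<Longrightarrow> (\<lambda>z. (a z)^2 * m z) \<in> MM"
  unfolding MM_def AA_def using qm_sqmult by fastforce
lemma MM_one: "(\<lambda>z. 1) \<in> MM"
  unfolding MM_def using qm_sos[OF is_sos2_one] by simp
lemma MM_proper: "(\<lambda>z. -1) \<notin> MM"
proof
  assume "(\<lambda>z. -1) \<in> MM"
  hence q: "(\<lambda>x u. -1::real) \<in> qmodule g1 m1 g2 m2" unfolding MM_def by simp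
  obtain x u where "x \<in> semialg g1 m1" "u \<in> semialg g2 m2" using ne by auto
  from qm_nonneg[OF q this] show False by simp
qed
lemma MM_sq: "a \<in> AA \<Longrightarrow> (\<lambda>z. (a z)^2) \<in> MM"
  using MM_sqmult[OF _ MM_one] by simp
lemma MM_const: "c \<ge> 0 \<Longrightarrow> (\<lambda>z. c) \<in> MM"
  using MM_sq[OF AA_const[of "sqrt c"]] by simp
lemma MM_scale: "c \<ge> 0 \<Longrightarrow> m \<in> MM \<Longrightarrow> (\<lambda>z. c * m z) \<in> MM"
  using MM_sqmult[OF AA_const[of "sqrt c"]] by simp
lemma AA_diff: "a \<in> AA \<Longrightarrow> b \<in> AA \<Longrightarrow> (\<lambda>z. a z - b z) \<in> AA"
  using AA_add[OF _ AA_mult[OF AA_const[of "-1"]], of a b] by simp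

definition HH where "HH = {a \<in> AA. \<exists>N. (\<lambda>z. N - (a z)^2) \<in> MM}"

lemma HH_const: "(\<lambda>z. c) \<in> HH"
  unfolding HH_def using AA_const MM_const[of 0] by (auto intro!: exI[of _ "c^2"])

lemma HH_add: assumes a: "a \<in> HH" and b: "b \<in> HH" shows "(\<lambda>z. a z + b z) \<in> HH"
proof -
  obtain Na Nb where aA: "a \<in> AA" and bA: "b \<in> AA" and Na: "(\<lambda>z. Na - (a z)^2) \<in> MM" and Nb: "(\<lambda>z. Nb - (b z)^2) \<in> MM"
    using a b unfolding HH_def by blast
  have "(\<lambda>z. 2 * (Na - (a z)^2) + 2 * (Nb - (b z)^2) + (a z - b z)^2) \<in> MM"
    by (rule MM_add[OF MM_add[OF MM_scale[OF _ Na] MM_scale[OF _ Nb]] MM_sq[OF AA_diff[OF aA bA]]]) auto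
  moreover have "(\<lambda>z. 2 * (Na - (a z)^2) + 2 * (Nb - (b z)^2) + (a z - b z)^2) = (\<lambda>z. (2*Na + 2*Nb) - (a z + b z)^2)"
    by (auto simp: fun_eq_iff power2_eq_square algebra_simps)
  ultimately show ?thesis unfolding HH_def using AA_add[OF aA bA] by auto
qed

lemma HH_mult: assumes a: "a \<in> HH" and b: "b \<in> HH" shows "(\<lambda>z. a z * b z) \<in> HH"
proof -
  obtain Na Nb where aA: "a \<in> AA" and bA: "b \<in> AA" and Na: "(\<lambda>z. Na - (a z)^2) \<in> MM" and Nb: "(\<lambda>z. Nb - (b z)^2) \<in> MM"
    using a b unfolding HH_def by blast
  define Nb' where "Nb' = max Nb 0"
  have Nb': "(\<lambda>z. Nb' - (b z)^2) \<in> MM"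
    using MM_add[OF Nb MM_const[of "Nb' - Nb"]] by (simp add: Nb'_def)
  have "(\<lambda>z. Nb' * (Na - (a z)^2) + (a z)^2 * (Nb' - (b z)^2)) \<in> MM"
    by (rule MM_add[OF MM_scale[OF _ Na] MM_sqmult[OF aA Nb']]) (simp add: Nb'_def)
  moreover have "(\<lambda>z. Nb' * (Na - (a z)^2) + (a z)^2 * (Nb' - (b z)^2)) = (\<lambda>z. Nb' * Na - (a z * b z)^2)"
    by (auto simp: fun_eq_iff power2_eq_square algebra_simps)
  ultimately show ?thesis unfolding HH_def using AA_mult[OF aA bA] by auto
qed

lemma MM_sum: "finite S \<Longrightarrow> (\<forall>i\<in>S. f i \<in> MM) \<Longrightarrow> (\<lambda>z. \<Sum>i\<in>S. f i z) \<in> MM"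
  by (rule closed_sum) (use MM_add MM_const[of 0] in auto)

lemma HH_x: "(\<lambda>z. fst z $ i) \<in> HH"
proof -
  obtain R where R: "(\<lambda>x u. R - ((norm x)^2 + (norm u)^2)) \<in> qmodule g1 m1 g2 m2"
    using arch unfolding archimedean_qm_def by blast
  have R': "(\<lambda>z. R - ((norm (fst z))^2 + (norm (snd z))^2)) \<in> MM" using R unfolding MM_def by simp
  have s1: "(\<lambda>z. \<Sum>j\<in>UNIV-{i}. (fst z $ j)^2) \<in> MM"
    by (rule MM_sum) (auto intro: MM_sq[OF AA_x])
  have s2: "(\<lambda>z. \<Sum>j\<in>UNIV. (snd z $ j)^2) \<in> MM"
    by (rule MM_sum) (auto intro: MM_sq[OF AA_u])
  have "(\<lambda>z. (R - ((norm (fst z))^2 + (norm (snd z))^2)) + (\<Sum>j\<in>UNIV-{i}. (fst z $ j)^2) + (\<Sum>j\<in>UNIV. (snd z $ j)^2)) \<in> MM"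
    by (rule MM_add[OF MM_add[OF R' s1] s2])
  moreover have "(\<lambda>z::(real^'n)\<times>(real^'p). (R - ((norm (fst z))^2 + (norm (snd z))^2)) + (\<Sum>j\<in>UNIV-{i}. (fst z $ j)^2) + (\<Sum>j\<in>UNIV. (snd z $ j)^2))
     = (\<lambda>z. R - (fst z $ i)^2)"
  proof (rule ext)
    fix z :: "(real^'n) \<times> (real^'p)"
    have e1: "(\<Sum>j\<in>UNIV. (fst z $ j)^2) = (fst z $ i)^2 + (\<Sum>j\<in>UNIV-{i}. (fst z $ j)^2)"
      by (simp add: sum.remove)
    have e2: "(norm (fst z))^2 = (\<Sum>j\<in>UNIV. (fst z $ j)^2)" "(norm (snd z))^2 = (\<Sum>j\<in>UNIV. (snd z $ j)^2)"
      by (rule norm_sq_vec)+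
    show "(R - ((norm (fst z))^2 + (norm (snd z))^2)) + (\<Sum>j\<in>UNIV-{i}. (fst z $ j)^2) + (\<Sum>j\<in>UNIV. (snd z $ j)^2)
      = R - (fst z $ i)^2" unfolding e2 e1 by simp
  qed
  ultimately show ?thesis unfolding HH_def using AA_x by auto
qed

lemma HH_u: "(\<lambda>z. snd z $ i) \<in> HH"
proof -
  obtain R where R: "(\<lambda>x u. R - ((norm x)^2 + (norm u)^2)) \<in> qmodule g1 m1 g2 m2"
    using arch unfolding archimedean_qm_def by blast
  have R': "(\<lambda>z. R - ((norm (fst z))^2 + (norm (snd z))^2)) \<in> MM" using R unfolding MM_def by simp
  have s1: "(\<lambda>z. \<Sum>j\<in>UNIV-{i}. (snd z $ j)^2) \<in> MM"
    by (rule MM_sum) (auto intro: MM_sq[OF AA_u])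
  have s2: "(\<lambda>z. \<Sum>j\<in>UNIV. (fst z $ j)^2) \<in> MM"
    by (rule MM_sum) (auto intro: MM_sq[OF AA_x])
  have "(\<lambda>z. (R - ((norm (fst z))^2 + (norm (snd z))^2)) + (\<Sum>j\<in>UNIV-{i}. (snd z $ j)^2) + (\<Sum>j\<in>UNIV. (fst z $ j)^2)) \<in> MM"
    by (rule MM_add[OF MM_add[OF R' s1] s2])
  moreover have "(\<lambda>z::(real^'n)\<times>(real^'p). (R - ((norm (fst z))^2 + (norm (snd z))^2)) + (\<Sum>j\<in>UNIV-{i}. (snd z $ j)^2) + (\<Sum>j\<in>UNIV. (fst z $ j)^2))
     = (\<lambda>z. R - (snd z $ i)^2)"
  proof (rule ext)
    fix z :: "(real^'n) \<times> (real^'p)"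
    have e1: "(\<Sum>j\<in>UNIV. (snd z $ j)^2) = (snd z $ i)^2 + (\<Sum>j\<in>UNIV-{i}. (snd z $ j)^2)"
      by (simp add: sum.remove)
    have e2: "(norm (fst z))^2 = (\<Sum>j\<in>UNIV. (fst z $ j)^2)" "(norm (snd z))^2 = (\<Sum>j\<in>UNIV. (snd z $ j)^2)"
      by (rule norm_sq_vec)+
    show "(R - ((norm (fst z))^2 + (norm (snd z))^2)) + (\<Sum>j\<in>UNIV-{i}. (snd z $ j)^2) + (\<Sum>j\<in>UNIV. (fst z $ j)^2)
      = R - (snd z $ i)^2" unfolding e2 e1 by simp
  qed
  ultimately show ?thesis unfolding HH_def using AA_u by auto
qed

lemma AA_HH: assumes a: "a \<in> AA" shows "a \<in> HH"
proof -
  have "(\<lambda>z. (\<lambda>x u. a (x, u)) (fst z) (snd z)) \<in> HH"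
  proof (rule poly_closed[OF HH_const HH_add HH_mult HH_x HH_u])
    show "is_poly2 (\<lambda>x u. a (x, u))" using a unfolding AA_def by simp
  qed
  thus ?thesis by simp
qed

lemma MM_arch: assumes a: "a \<in> AA" shows "\<exists>N. (\<lambda>z. N - a z) \<in> MM"
proof -
  obtain N0 where N0: "(\<lambda>z. N0 - (a z)^2) \<in> MM" using AA_HH[OF a] unfolding HH_def by blast
  define k where "k = \<bar>N0\<bar> + 1"
  have k1: "k \<ge> 1" "k \<ge> N0" unfolding k_def by auto
  have "k * 1 \<le> k * k" by (rule mult_left_mono) (use k1 in auto)
  hence k: "k > 0" "k^2 \<ge> N0" using k1 unfolding power2_eq_square by linarith+
  have "(\<lambda>z. (1/(2*k)) * ((k - a z)^2 + ((k^2 - N0) + (N0 - (a z)^2)))) \<in> MM"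
    by (rule MM_scale[OF _ MM_add[OF MM_sq[OF AA_diff[OF AA_const a]] MM_add[OF MM_const N0]]]) (use k in auto)
  moreover have "(\<lambda>z. (1/(2*k)) * ((k - a z)^2 + ((k^2 - N0) + (N0 - (a z)^2)))) = (\<lambda>z. k - a z)"
  proof (rule ext)
    fix z
    have "(k - a z)^2 + ((k^2 - N0) + (N0 - (a z)^2)) = (2*k) * (k - a z)"
      by (simp add: power2_eq_square algebra_simps)
    thus "(1/(2*k)) * ((k - a z)^2 + ((k^2 - N0) + (N0 - (a z)^2))) = k - a z" using k by simp
  qed
  ultimately show ?thesis by auto
qed

lemma qmod_inst: "qmod AA MM"
proof
  show "\<And>c. (\<lambda>z. c) \<in> AA" by (rule AA_const)
  show "\<And>a b. a \<in> AA \<Longrightarrow> b \<in> AA \<Longrightarrow> (\<lambda>z. a z + b z) \<in> AA" by (rule AA_add)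
  show "\<And>a b. a \<in> AA \<Longrightarrow> b \<in> AA \<Longrightarrow> (\<lambda>z. a z * b z) \<in> AA" by (rule AA_mult)
  show "\<And>m. m \<in> MM \<Longrightarrow> m \<in> AA" by (rule MM_A)
  show "\<And>a b. a \<in> MM \<Longrightarrow> b \<in> MM \<Longrightarrow> (\<lambda>z. a z + b z) \<in> MM" by (rule MM_add)
  show "\<And>a m. a \<in> AA \<Longrightarrow> m \<in> MM \<Longrightarrow> (\<lambda>z. (a z)\<^sup>2 * m z) \<in> MM" by (rule MM_sqmult)
  show "(\<lambda>z. 1) \<in> MM" by (rule MM_one)
  show "\<And>a. a \<in> AA \<Longrightarrow> \<exists>N. (\<lambda>z. N - a z) \<in> MM" by (rule MM_arch)
  show "(\<lambda>z. -1) \<notin> MM" by (rule MM_proper)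
qed

end

context setting begin

lemma char_eval:
  assumes add: "\<forall>a\<in>AA. \<forall>b\<in>AA. \<phi> (\<lambda>z. a z + b z) = \<phi> a + \<phi> b"
    and mult: "\<forall>a\<in>AA. \<forall>b\<in>AA. \<phi> (\<lambda>z. a z * b z) = \<phi> a * \<phi> b"
    and const: "\<forall>c. \<phi> (\<lambda>z. c) = c" and h: "is_poly2 h"
  shows "\<phi> (\<lambda>z. h (fst z) (snd z)) = h (\<chi> i. \<phi> (\<lambda>z. fst z $ i)) (\<chi> j. \<phi> (\<lambda>z. snd z $ j))"
proof -
  define \<xi> where "\<xi> = ((\<chi> i. \<phi> (\<lambda>z. fst z $ i)), (\<chi> j. \<phi> (\<lambda>z. snd z $ j)))"
  define B where "B = {a \<in> AA. \<phi> a = a \<xi>}"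
  have "(\<lambda>z. h (fst z) (snd z)) \<in> B"
  proof (rule poly_closed[OF _ _ _ _ _ h])
    show "\<And>c. (\<lambda>z. c) \<in> B" unfolding B_def using AA_const const by simp
    show "\<And>a b. a \<in> B \<Longrightarrow> b \<in> B \<Longrightarrow> (\<lambda>z. a z + b z) \<in> B" unfolding B_def using AA_add add by simp
    show "\<And>a b. a \<in> B \<Longrightarrow> b \<in> B \<Longrightarrow> (\<lambda>z. a z * b z) \<in> B" unfolding B_def using AA_mult mult by simp
    show "\<And>i. (\<lambda>z. fst z $ i) \<in> B" unfolding B_def \<xi>_def using AA_x by simp
    show "\<And>j. (\<lambda>z. snd z $ j) \<in> B" unfolding B_def \<xi>_def using AA_u by simp
  qed
  thus ?thesis unfolding B_def \<xi>_def by simp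
qed

theorem putinar:
  assumes h: "is_poly2 h" and d: "\<delta> > 0"
    and pos: "\<And>x u. x \<in> semialg g1 m1 \<Longrightarrow> u \<in> semialg g2 m2 \<Longrightarrow> h x u \<ge> \<delta>"
  shows "h \<in> qmodule g1 m1 g2 m2"
proof -
  interpret Q: qmod AA MM by (rule qmod_inst)
  have "(\<lambda>z. h (fst z) (snd z)) \<in> MM"
  proof (rule Q.KD[OF AA_uncurry[OF h] d])
    fix \<phi>
    assume add: "\<And>a b. a \<in> AA \<Longrightarrow> b \<in> AA \<Longrightarrow> \<phi> (\<lambda>z. a z + b z) = \<phi> a + \<phi> b"
      and mult: "\<And>a b. a \<in> AA \<Longrightarrow> b \<in> AA \<Longrightarrow> \<phi> (\<lambda>z. a z * b z) = \<phi> a * \<phi> b"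
      and const: "\<And>c. \<phi> (\<lambda>z. c) = c" and nn: "\<And>m. m \<in> MM \<Longrightarrow> 0 \<le> \<phi> m"
    have addo: "\<forall>a\<in>AA. \<forall>b\<in>AA. \<phi> (\<lambda>z. a z + b z) = \<phi> a + \<phi> b" using add by simp
    have multo: "\<forall>a\<in>AA. \<forall>b\<in>AA. \<phi> (\<lambda>z. a z * b z) = \<phi> a * \<phi> b" using mult by simp
    have consto: "\<forall>c. \<phi> (\<lambda>z. c) = c" using const by simp
    note ce = char_eval[OF addo multo consto]
    define xx where "xx = (\<chi> i. \<phi> (\<lambda>z. fst z $ i))"
    define uu where "uu = (\<chi> j. \<phi> (\<lambda>z. snd z $ j))"
    have xx: "xx \<in> semialg g1 m1" unfolding semialg_def
    proof (intro CollectI allI impI)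
      fix l assume l: "l < m1"
      have p: "is_poly2 (\<lambda>x (u::real^'p). g1 l x)"
        using g1p l poly_lift_x unfolding is_poly_def is_poly2_def by blast
      have "(\<lambda>z. g1 l (fst z)) \<in> MM" unfolding MM_def using qm_g1[OF l] by simp
      hence "0 \<le> \<phi> (\<lambda>z. g1 l (fst z))" by (rule nn)
      thus "0 \<le> g1 l xx" using ce[OF p] by (simp add: xx_def)
    qed
    have uu: "uu \<in> semialg g2 m2" unfolding semialg_def
    proof (intro CollectI allI impI)
      fix l assume l: "l < m2"
      have p: "is_poly2 (\<lambda>(x::real^'n) u. g2 l u)"
        using g2p l poly_lift_u unfolding is_poly_def is_poly2_def by blast
      have "(\<lambda>z. g2 l (snd z)) \<in> MM" unfolding MM_def using qm_g2[OF l] by simp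
      hence "0 \<le> \<phi> (\<lambda>z. g2 l (snd z))" by (rule nn)
      thus "0 \<le> g2 l uu" using ce[OF p] by (simp add: uu_def)
    qed
    show "\<phi> (\<lambda>z. h (fst z) (snd z)) \<ge> \<delta>"
      using ce[OF h] pos[OF xx uu] by (simp add: xx_def uu_def)
  qed
  thus ?thesis unfolding MM_def by simp
qed

end

lemma poly2_cont:
  fixes f :: "real^'n::finite \<Rightarrow> real^'p::finite \<Rightarrow> real"
  assumes "is_poly2 f" shows "continuous_on UNIV (\<lambda>z. f (fst z) (snd z))"
proof -
  define B where "B = {h :: (real^'n) \<times> (real^'p) \<Rightarrow> real. continuous_on UNIV h}"
  have "(\<lambda>z. f (fst z) (snd z)) \<in> B"
  proof (rule poly_closed[OF _ _ _ _ _ assms])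
    show "\<And>c. (\<lambda>z. c) \<in> B" by (simp add: B_def)
    show "\<And>a b. a \<in> B \<Longrightarrow> b \<in> B \<Longrightarrow> (\<lambda>z. a z + b z) \<in> B"
      unfolding B_def mem_Collect_eq by (rule continuous_on_add)
    show "\<And>a b. a \<in> B \<Longrightarrow> b \<in> B \<Longrightarrow> (\<lambda>z. a z * b z) \<in> B"
      unfolding B_def mem_Collect_eq by (rule continuous_on_mult)
    show "\<And>i. (\<lambda>z. fst z $ i) \<in> B"
      unfolding B_def by (auto intro!: continuous_intros)
    show "\<And>i. (\<lambda>z. snd z $ i) \<in> B"
      unfolding B_def by (auto intro!: continuous_intros)
  qed
  thus ?thesis by (simp add: B_def)
qed

lemma poly_cont:
  fixes p :: "real^'n::finite \<Rightarrow> real"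
  assumes "poly_le k p" shows "continuous_on UNIV p"
proof -
  have "is_poly2 (\<lambda>x (u::real^'n). p x)" unfolding is_poly2_def using poly_lift_x[OF assms] by blast
  hence c: "continuous_on UNIV (\<lambda>z::(real^'n)\<times>(real^'n). p (fst z))" using poly2_cont by fastforce
  have "continuous_on UNIV ((\<lambda>z::(real^'n)\<times>(real^'n). p (fst z)) \<circ> (\<lambda>x. (x, 0)))"
    by (rule continuous_on_compose) (auto intro: continuous_on_subset[OF c] continuous_intros)
  thus ?thesis by (simp add: comp_def)
qed

lemma poly_sum:
  fixes f :: "'a \<Rightarrow> real^'n::finite \<Rightarrow> real"
  shows "finite S \<Longrightarrow> (\<forall>i\<in>S. poly_le k (f i)) \<Longrightarrow> poly_le k (\<lambda>x. \<Sum>i\<in>S. f i x)"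
proof (induction S rule: finite_induct)
  case empty thus ?case using poly_le_mono[OF poly_const[of 0]] by simp
next
  case (insert a F) thus ?case using poly_add[of k "f a" "\<lambda>x. \<Sum>i\<in>F. f i x"] by simp
qed

lemma rpf_poly:
  fixes g :: "real^'n::finite \<Rightarrow> real"
  assumes "real_polynomial_function g" shows "\<exists>k. poly_le k g"
  using assms
proof (induction rule: real_polynomial_function.induct)
  case (linear f)
  have lf: "linear f" by (rule bounded_linear.linear[OF linear])
  have "f x = (\<Sum>i\<in>UNIV. f (axis i 1) * x $ i)" for x
  proof -
    have "f x = f (\<Sum>i\<in>UNIV. (x $ i) *\<^sub>R axis i 1)"
      using basis_expansion[of x] by (simp add: scalar_mult_eq_scaleR)
    also have "\<dots> = (\<Sum>i\<in>UNIV. (x $ i) * f (axis i 1))"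
      by (simp add: linear_sum[OF lf] linear_scale[OF lf])
    finally show ?thesis by (simp add: mult.commute)
  qed
  moreover have "poly_le 1 (\<lambda>x. \<Sum>i\<in>UNIV. f (axis i 1) * x $ i)"
  proof (rule poly_sum[OF finite_class.finite_UNIV], rule ballI)
    fix i :: 'n
    show "poly_le 1 (\<lambda>x. f (axis i 1) * x $ i)" using poly_mult[OF poly_const poly_coord] by simp
  qed
  ultimately show ?case by (metis (no_types, lifting) ext)
next
  case (const c) thus ?case using poly_const by blast
next
  case (add f g)
  then obtain k1 k2 where "poly_le k1 f" "poly_le k2 g" by blast
  hence "poly_le (k1+k2) f" "poly_le (k1+k2) g" using poly_le_mono by fastforce+
  thus ?case using poly_add by blast
next
  case (mult f g)
  then obtain k1 k2 where "poly_le k1 f" "poly_le k2 g" by blast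
  thus ?case using poly_mult by blast
qed

lemma pf_poly:
  fixes g :: "real^'n::finite \<Rightarrow> real"
  assumes "polynomial_function g" shows "\<exists>k. poly_le k g"
proof -
  have bl: "bounded_linear (id::real \<Rightarrow> real)" unfolding id_def by (rule bounded_linear_ident)
  have "real_polynomial_function (id \<circ> g)" using assms bl unfolding polynomial_function_def by blast
  thus ?thesis using rpf_poly by simp
qed

lemma bound_choice:
  fixes m :: nat
  assumes "\<forall>l<m. \<exists>k. sos2_le k (s l)"
  shows "\<exists>K. \<forall>l<m. sos2_le K (s l)"
proof -
  from assms obtain kf where kf: "\<forall>l<m. sos2_le (kf l) (s l)" by metis
  have "\<forall>l<m. sos2_le (\<Sum>j<m. kf j) (s l)"
  proof (intro allI impI)
    fix l assume l: "l < m"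
    have "kf l \<le> (\<Sum>j<m. kf j)" using l by (intro member_le_sum) auto
    thus "sos2_le (\<Sum>j<m. kf j) (s l)" using kf l sos2_mono by blast
  qed
  thus ?thesis by blast
qed

locale mainctx = setting g1 m1 g2 m2 for g1 :: "nat \<Rightarrow> real^'n::finite \<Rightarrow> real" and m1
   and g2 :: "nat \<Rightarrow> real^'p::finite \<Rightarrow> real" and m2 +
  fixes f :: "real^'n \<Rightarrow> real^'p \<Rightarrow> real" and F :: "real^'n \<Rightarrow> real"
  assumes f_poly: "is_poly2 f"
    and cpt: "compact (semialg g1 m1 \<times> semialg g2 m2)"
    and F_def: "\<forall>x\<in>semialg g1 m1. F x = (INF u\<in>semialg g2 m2. f x u)"
begin

abbreviation "S1 \<equiv> semialg g1 m1"
abbreviation "S2 \<equiv> semialg g2 m2"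

lemma S_ne: "S1 \<noteq> {}" "S2 \<noteq> {}" using ne by auto

lemma S1_compact: "compact S1"
proof -
  have "compact (fst ` (S1 \<times> S2))" by (rule compact_continuous_image[OF continuous_on_fst[OF continuous_on_id] cpt])
  thus ?thesis using S_ne(2) by simp
qed

lemma fz_cont: "continuous_on UNIV (\<lambda>z. f (fst z) (snd z))" by (rule poly2_cont[OF f_poly])

lemma f_bdd: assumes x: "x \<in> S1" shows "bdd_below (f x ` S2)"
proof -
  have "compact ((\<lambda>z. f (fst z) (snd z)) ` (S1 \<times> S2))"
    by (rule compact_continuous_image[OF continuous_on_subset[OF fz_cont] cpt]) simp
  hence "bdd_below ((\<lambda>z. f (fst z) (snd z)) ` (S1 \<times> S2))"
    by (simp add: bounded_imp_bdd_below compact_imp_bounded)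
  moreover have "f x ` S2 \<subseteq> (\<lambda>z. f (fst z) (snd z)) ` (S1 \<times> S2)" using x by force
  ultimately show ?thesis by (rule bdd_below_mono)
qed

lemma F_le: "x \<in> S1 \<Longrightarrow> u \<in> S2 \<Longrightarrow> F x \<le> f x u"
  using F_def cINF_lower[OF f_bdd] by simp

lemma F_ge: assumes x: "x \<in> S1" and c: "\<And>u. u \<in> S2 \<Longrightarrow> c \<le> f x u" shows "c \<le> F x"
proof -
  have "c \<le> (INF u\<in>S2. f x u)" by (rule cINF_greatest[OF S_ne(2) c])
  thus ?thesis using F_def x by simp
qed

lemma F_cont: "continuous_on S1 F"
proof -
  have uc: "uniformly_continuous_on (S1 \<times> S2) (\<lambda>z. f (fst z) (snd z))"
    by (rule compact_uniformly_continuous[OF continuous_on_subset[OF fz_cont] cpt]) simp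
  show ?thesis unfolding continuous_on_iff
  proof (intro ballI allI impI)
    fix x e assume x: "x \<in> S1" and e: "(e::real) > 0"
    obtain d where d: "d > 0" and dd: "\<forall>z\<in>S1 \<times> S2. \<forall>z'\<in>S1 \<times> S2. dist z' z < d \<longrightarrow>
        dist (f (fst z') (snd z')) (f (fst z) (snd z)) < e/2"
      using uc e unfolding uniformly_continuous_on_def by (metis half_gt_zero)
    show "\<exists>d>0. \<forall>x'\<in>S1. dist x' x < d \<longrightarrow> dist (F x') (F x) < e"
    proof (intro exI conjI ballI impI)
      show "d > 0" by (rule d)
      fix x' assume x': "x' \<in> S1" and dx: "dist x' x < d"
      have close: "\<bar>f x' u - f x u\<bar> < e/2" if u: "u \<in> S2" for u
      proof -
        have "dist (x', u) (x, u) = dist x' x" by (simp add: dist_Pair_Pair)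
        hence "dist (f (fst (x',u)) (snd (x',u))) (f (fst (x,u)) (snd (x,u))) < e/2"
          using dd x x' u dx by (metis SigmaI)
        thus ?thesis by (simp add: dist_real_def)
      qed
      have 1: "F x' - e/2 \<le> F x"
      proof (rule F_ge[OF x])
        fix u assume u: "u \<in> S2"
        show "F x' - e/2 \<le> f x u" using F_le[OF x' u] close[OF u] by linarith
      qed
      have 2: "F x - e/2 \<le> F x'"
      proof (rule F_ge[OF x'])
        fix u assume u: "u \<in> S2"
        show "F x - e/2 \<le> f x' u" using F_le[OF x u] close[OF u] by linarith
      qed
      show "dist (F x') (F x) < e" using 1 2 e by (simp add: dist_real_def abs_le_iff)
    qed
  qed
qed

lemma feas_le:
  assumes p: "p \<in> rho_feasible f g1 m1 g2 m2 d" and x: "x \<in> S1"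
  shows "p x \<le> F x"
proof (rule F_ge[OF x])
  fix u assume u: "u \<in> S2"
  obtain s0 s1 s2 where s: "sos2_le d s0"
      "\<forall>l<m1. sos2_le (d - nat \<lceil>real (pdeg (g1 l)) / 2\<rceil>) (s1 l)"
      "\<forall>l<m2. sos2_le (d - nat \<lceil>real (pdeg (g2 l)) / 2\<rceil>) (s2 l)"
      "\<forall>x u. f x u - p x = s0 x u + (\<Sum>l<m1. s1 l x u * g1 l x) + (\<Sum>l<m2. s2 l x u * g2 l u)"
    using p unfolding rho_feasible_def by blast
  have "(\<lambda>x u. f x u - p x) \<in> qmodule g1 m1 g2 m2"
  proof (rule qm_I)
    show "is_sos2 s0" using s(1) unfolding is_sos2_def by blast
    show "\<forall>l<m1. is_sos2 (s1 l)" using s(2) unfolding is_sos2_def by blast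
    show "\<forall>l<m2. is_sos2 (s2 l)" using s(3) unfolding is_sos2_def by blast
  qed (use s(4) in blast)
  from qm_nonneg[OF this x u] show "p x \<le> f x u" by simp
qed

lemma approx:
  assumes e: "\<epsilon> > 0"
  shows "\<exists>p D. (\<forall>d\<ge>D. p \<in> rho_feasible f g1 m1 g2 m2 d) \<and> (\<forall>x\<in>S1. F x - 3*\<epsilon> \<le> p x) \<and> continuous_on UNIV p"
proof -
  obtain q where q: "polynomial_function q" "\<forall>x\<in>S1. norm (F x - q x) < \<epsilon>"
    using Stone_Weierstrass_polynomial_function[OF S1_compact F_cont e] by blast
  obtain k where k: "poly_le k q" using pf_poly[OF q(1)] by blast
  define p where "p = (\<lambda>x. q x + (- 2*\<epsilon>))"
  have pk: "poly_le k p" unfolding p_def by (rule poly_add[OF k poly_le_mono[OF poly_const]]) simp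
  have pc: "continuous_on UNIV p" by (rule poly_cont[OF pk])
  have pF: "F x - 3*\<epsilon> \<le> p x" "p x + \<epsilon> \<le> F x" if "x \<in> S1" for x
    using q(2) that by (auto simp: p_def abs_less_iff)
  define h where "h = (\<lambda>x u. f x u + (-1) * p x)"
  have hp: "is_poly2 h" unfolding h_def
    by (rule is_poly2_add[OF f_poly is_poly2_mult[OF is_poly2_const]])
       (use poly_lift_x[OF pk] in \<open>auto simp: is_poly2_def\<close>)
  have "h \<in> qmodule g1 m1 g2 m2"
  proof (rule putinar[OF hp e])
    fix x u assume x: "x \<in> S1" and u: "u \<in> S2"
    show "\<epsilon> \<le> h x u" using F_le[OF x u] pF(2)[OF x] by (simp add: h_def)
  qed
  then obtain s0 s1 s2 where s: "is_sos2 s0" "\<forall>l<m1. is_sos2 (s1 l)" "\<forall>l<m2. is_sos2 (s2 l)"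
    "\<And>x u. h x u = s0 x u + (\<Sum>l<m1. s1 l x u * g1 l x) + (\<Sum>l<m2. s2 l x u * g2 l u)"
    unfolding qmodule_def by blast
  obtain k0 where k0: "sos2_le k0 s0" using s(1) unfolding is_sos2_def by blast
  obtain K1 where K1: "\<forall>l<m1. sos2_le K1 (s1 l)"
    using bound_choice[of m1 s1] s(2) unfolding is_sos2_def by blast
  obtain K2 where K2: "\<forall>l<m2. sos2_le K2 (s2 l)"
    using bound_choice[of m2 s2] s(3) unfolding is_sos2_def by blast
  define c1 where "c1 l = nat \<lceil>real (pdeg (g1 l)) / 2\<rceil>" for l
  define c2 where "c2 l = nat \<lceil>real (pdeg (g2 l)) / 2\<rceil>" for l
  define D where "D = k + k0 + K1 + K2 + (\<Sum>l<m1. c1 l) + (\<Sum>l<m2. c2 l)"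
  have feas: "p \<in> rho_feasible f g1 m1 g2 m2 d" if d: "d \<ge> D" for d
    unfolding rho_feasible_def
  proof (intro CollectI conjI exI allI impI)
    show "poly_le (2*d) p" by (rule poly_le_mono[OF pk]) (use d in \<open>simp add: D_def\<close>)
    show "sos2_le d s0" by (rule sos2_mono[OF k0]) (use d in \<open>simp add: D_def\<close>)
    fix l assume l: "l < m1"
    have "c1 l \<le> (\<Sum>l<m1. c1 l)" using l by (intro member_le_sum) auto
    hence "K1 \<le> d - c1 l" using d by (simp add: D_def)
    hence "K1 \<le> d - nat \<lceil>real (pdeg (g1 l)) / 2\<rceil>" by (simp add: c1_def)
    moreover have "sos2_le K1 (s1 l)" using K1 l by blast
    ultimately show "sos2_le (d - nat \<lceil>real (pdeg (g1 l)) / 2\<rceil>) (s1 l)"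
      using sos2_mono by blast
  next
    fix l assume l: "l < m2"
    have "c2 l \<le> (\<Sum>l<m2. c2 l)" using l by (intro member_le_sum) auto
    hence "K2 \<le> d - c2 l" using d by (simp add: D_def)
    hence "K2 \<le> d - nat \<lceil>real (pdeg (g2 l)) / 2\<rceil>" by (simp add: c2_def)
    moreover have "sos2_le K2 (s2 l)" using K2 l by blast
    ultimately show "sos2_le (d - nat \<lceil>real (pdeg (g2 l)) / 2\<rceil>) (s2 l)"
      using sos2_mono by blast
  next
    fix x u
    show "f x u - p x = s0 x u + (\<Sum>l<m1. s1 l x u * g1 l x) + (\<Sum>l<m2. s2 l x u * g2 l u)"
      using s(4)[of x u] by (simp add: h_def)
  qed
  show ?thesis using feas pF(1) pc by blast
qed

end

locale mainctx2 = mainctx g1 m1 g2 m2 f F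
  for g1 :: "nat \<Rightarrow> real^'n::finite \<Rightarrow> real" and m1 and g2 :: "nat \<Rightarrow> real^'p::finite \<Rightarrow> real" and m2
    and f F +
  fixes pd :: "nat \<Rightarrow> real^'n \<Rightarrow> real"
  assumes optimal: "\<exists>d0. \<forall>d\<ge>d0. rho_optimal f g1 m1 g2 m2 d (pd d)"
    and zero_null: "emeasure lborel {x\<in>semialg g1 m1. F x = 0} = 0"
begin

lemma S1_sets: "S1 \<in> sets lborel"
  using S1_compact by (simp add: borel_closed compact_imp_closed)

lemma S1_fin: "emeasure lborel S1 \<noteq> \<infinity>"
  using fmeasurable_compact[OF S1_compact] by (auto simp: fmeasurable_def less_top)

lemma si: "continuous_on S1 g \<Longrightarrow> set_integrable lborel S1 (g :: real^'n \<Rightarrow> real)"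
  unfolding set_integrable_def by (rule borel_integrable_compact[OF S1_compact])


lemma pd_props:
  assumes "rho_optimal f g1 m1 g2 m2 d (pd d)"
  shows "continuous_on UNIV (pd d)" "\<And>x. x \<in> S1 \<Longrightarrow> pd d x \<le> F x"
    "\<And>q. q \<in> rho_feasible f g1 m1 g2 m2 d \<Longrightarrow> (LINT x:S1|lborel. q x) \<le> (LINT x:S1|lborel. pd d x)"
proof -
  have fe: "pd d \<in> rho_feasible f g1 m1 g2 m2 d" using assms unfolding rho_optimal_def by blast
  hence "poly_le (2*d) (pd d)" unfolding rho_feasible_def by blast
  thus "continuous_on UNIV (pd d)" by (rule poly_cont)
  show "\<And>x. x \<in> S1 \<Longrightarrow> pd d x \<le> F x" using feas_le[OF fe] by blast
  show "\<And>q. q \<in> rho_feasible f g1 m1 g2 m2 d \<Longrightarrow> (LINT x:S1|lborel. q x) \<le> (LINT x:S1|lborel. pd d x)"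
    using assms unfolding rho_optimal_def by blast
qed

lemma int_bound:
  assumes e: "\<epsilon> > 0"
  shows "\<exists>D. \<forall>d\<ge>D. 0 \<le> (LINT x:S1|lborel. \<bar>F x - pd d x\<bar>) \<and>
                 (LINT x:S1|lborel. \<bar>F x - pd d x\<bar>) \<le> 3 * \<epsilon> * measure lborel S1"
proof -
  obtain d0 where d0: "\<forall>d\<ge>d0. rho_optimal f g1 m1 g2 m2 d (pd d)" using optimal by blast
  obtain p D where p: "\<forall>d\<ge>D. p \<in> rho_feasible f g1 m1 g2 m2 d" "\<forall>x\<in>S1. F x - 3*\<epsilon> \<le> p x"
    "continuous_on UNIV p" using approx[OF e] by blast
  have Fi: "set_integrable lborel S1 F" by (rule si[OF F_cont])
  have pi: "set_integrable lborel S1 p" by (rule si[OF continuous_on_subset[OF p(3)]]) simp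
  show ?thesis
  proof (intro exI[of _ "max d0 D"] allI impI conjI)
    fix d assume d: "max d0 D \<le> d"
    have opt: "rho_optimal f g1 m1 g2 m2 d (pd d)" using d0 d by simp
    note pp = pd_props[OF opt]
    have pdi: "set_integrable lborel S1 (pd d)" by (rule si[OF continuous_on_subset[OF pp(1)]]) simp
    have absi: "set_integrable lborel S1 (\<lambda>x. \<bar>F x - pd d x\<bar>)"
      by (rule set_integrable_abs[OF set_integral_diff(1)[OF Fi pdi]])
    have zi: "set_integrable lborel S1 (\<lambda>x. 0::real)" by (rule si) simp
    have "(LINT x:S1|lborel. (0::real)) \<le> (LINT x:S1|lborel. \<bar>F x - pd d x\<bar>)"
      by (rule set_integral_mono[OF zi absi]) simp
    thus "0 \<le> (LINT x:S1|lborel. \<bar>F x - pd d x\<bar>)" by simp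
    have "(LINT x:S1|lborel. \<bar>F x - pd d x\<bar>) = (LINT x:S1|lborel. F x - pd d x)"
      by (rule set_lebesgue_integral_cong[OF S1_sets]) (use pp(2) in auto)
    also have "\<dots> = (LINT x:S1|lborel. F x) - (LINT x:S1|lborel. pd d x)"
      by (rule set_integral_diff(2)[OF Fi pdi])
    also have "\<dots> \<le> (LINT x:S1|lborel. F x) - (LINT x:S1|lborel. p x)"
      using pp(3)[of p] p(1) d by simp
    also have "\<dots> = (LINT x:S1|lborel. F x - p x)"
      by (rule set_integral_diff(2)[OF Fi pi, symmetric])
    also have "\<dots> \<le> (LINT x:S1|lborel. 3 * \<epsilon>)"
      by (rule set_integral_mono[OF set_integral_diff(1)[OF Fi pi] si]) (use p(2) in auto)
    also have "\<dots> = measure lborel S1 *\<^sub>R (3 * \<epsilon>)"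
      by (rule set_integral_const[OF S1_sets S1_fin])
    also have "\<dots> = 3 * \<epsilon> * measure lborel S1" by (simp only: real_scaleR_def mult.commute)
    finally show "(LINT x:S1|lborel. \<bar>F x - pd d x\<bar>) \<le> 3 * \<epsilon> * measure lborel S1" .
  qed
qed

lemma int_lim: "(\<lambda>d. LINT x:S1|lborel. \<bar>F x - pd d x\<bar>) \<longlonglongrightarrow> 0"
proof (rule LIMSEQ_I)
  fix r :: real assume r: "r > 0"
  define M where "M = measure lborel S1"
  have m0: "M \<ge> 0" unfolding M_def by (rule measure_nonneg)
  define \<epsilon> where "\<epsilon> = r / (3 * (M + 1))"
  have m1: "3 * (M + 1) > 0" using m0 by simp
  have e: "\<epsilon> > 0" unfolding \<epsilon>_def by (rule divide_pos_pos[OF r m1])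
  obtain D where D: "\<forall>d\<ge>D. 0 \<le> (LINT x:S1|lborel. \<bar>F x - pd d x\<bar>) \<and>
                 (LINT x:S1|lborel. \<bar>F x - pd d x\<bar>) \<le> 3 * \<epsilon> * M"
    using int_bound[OF e] unfolding M_def by blast
  have "3 * \<epsilon> * M < r"
  proof -
    have "3 * \<epsilon> * M = r * (M / (M + 1))"
      using m0 by (simp add: \<epsilon>_def field_simps)
    also have "\<dots> < r * 1" using r m0 by (intro mult_strict_left_mono) auto
    finally show ?thesis by simp
  qed
  thus "\<exists>no. \<forall>n\<ge>no. norm ((LINT x:S1|lborel. \<bar>F x - pd n x\<bar>) - 0) < r"
    using D by (intro exI[of _ D]) force
qed

end

context mainctx2 begin

lemma G_char: "x \<in> S1 \<Longrightarrow> (\<forall>u\<in>S2. 0 \<le> f x u) \<longleftrightarrow> 0 \<le> F x"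
  using F_le F_ge by (meson order_trans)

lemma S1_closed: "closed S1" by (rule compact_imp_closed[OF S1_compact])

lemma closed_level:
  assumes "continuous_on S1 g" "closed T"
  shows "closed {x\<in>S1. g x \<in> T}" "compact {x\<in>S1. g x \<in> T}"
proof -
  have e: "{x\<in>S1. g x \<in> T} = S1 \<inter> g -` T" by auto
  show c: "closed {x\<in>S1. g x \<in> T}" unfolding e by (rule continuous_closed_preimage[OF assms(1) S1_closed assms(2)])
  have "compact (S1 \<inter> {x\<in>S1. g x \<in> T})" by (rule compact_Int_closed[OF S1_compact c])
  moreover have "S1 \<inter> {x\<in>S1. g x \<in> T} = {x\<in>S1. g x \<in> T}" by auto
  ultimately show "compact {x\<in>S1. g x \<in> T}" by simp
qed

definition Bn :: "nat \<Rightarrow> (real^'n) set" where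
  "Bn n = {x\<in>S1. F x \<in> {0..1/real (Suc n)}}"

lemma Bn_compact: "compact (Bn n)"
  unfolding Bn_def by (rule closed_level(2)[OF F_cont closed_atLeastAtMost])

lemma Bn_lim: "(\<lambda>n. measure lborel (Bn n)) \<longlonglongrightarrow> 0"
proof -
  have "(\<lambda>n. measure lborel (Bn n)) \<longlonglongrightarrow> measure lborel (\<Inter>i. Bn i)"
  proof (rule Lim_measure_decseq)
    show "range Bn \<subseteq> sets lborel" using Bn_compact by (auto simp: borel_closed compact_imp_closed)
    show "decseq Bn" unfolding decseq_def
    proof (intro allI impI)
      fix m n :: nat assume mn: "m \<le> n"
      have "1 / real (Suc n) \<le> 1 / real (Suc m)" by (rule divide_left_mono) (use mn in auto)
      thus "Bn n \<subseteq> Bn m" unfolding Bn_def by auto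
    qed
    show "\<And>i. emeasure lborel (Bn i) \<noteq> \<infinity>"
      using fmeasurable_compact[OF Bn_compact] by (auto simp: fmeasurable_def less_top)
  qed
  moreover have "(\<Inter>i. Bn i) = {x\<in>S1. F x = 0}"
  proof
    show "{x\<in>S1. F x = 0} \<subseteq> (\<Inter>i. Bn i)" by (auto simp: Bn_def)
    show "(\<Inter>i. Bn i) \<subseteq> {x\<in>S1. F x = 0}"
    proof
      fix x assume x: "x \<in> (\<Inter>i. Bn i)"
      hence xs: "x \<in> S1" "0 \<le> F x" and le: "\<And>i. F x \<le> 1/real (Suc i)" by (auto simp: Bn_def)
      have "F x \<le> 0"
      proof (rule ccontr)
        assume "\<not> F x \<le> 0"
        then obtain i where "inverse (real (Suc i)) < F x" using reals_Archimedean[of "F x"] by force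
        thus False using le[of i] by (simp add: divide_inverse)
      qed
      thus "x \<in> {x\<in>S1. F x = 0}" using xs by auto
    qed
  qed
  moreover have "measure lborel {x\<in>S1. F x = 0} = 0" using zero_null by (simp add: measure_def)
  ultimately show ?thesis by simp
qed

lemma meas_lim:
  "(\<lambda>d. measure lborel ({x\<in>S1. \<forall>u\<in>S2. 0 \<le> f x u} - {x\<in>S1. 0 \<le> pd d x})) \<longlonglongrightarrow> 0"
proof (rule LIMSEQ_I)
  fix r :: real assume r: "r > 0"
  obtain d0 where d0: "\<forall>d\<ge>d0. rho_optimal f g1 m1 g2 m2 d (pd d)" using optimal by blast
  obtain N where N: "\<forall>n\<ge>N. norm (measure lborel (Bn n) - 0) < r/2"
    using LIMSEQ_D[OF Bn_lim, of "r/2"] r by auto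
  define \<delta> where "\<delta> = 1 / real (Suc N)"
  have dpos: "\<delta> > 0" by (simp add: \<delta>_def)
  have BN: "measure lborel (Bn N) < r/2" using N by auto
  obtain D where D: "\<forall>d\<ge>D. norm ((LINT x:S1|lborel. \<bar>F x - pd d x\<bar>) - 0) < \<delta> * (r/2)"
    using LIMSEQ_D[OF int_lim, of "\<delta> * (r/2)"] r dpos by auto
  show "\<exists>no. \<forall>d\<ge>no. norm (measure lborel ({x\<in>S1. \<forall>u\<in>S2. 0 \<le> f x u} - {x\<in>S1. 0 \<le> pd d x}) - 0) < r"
  proof (intro exI[of _ "max D d0"] allI impI)
    fix d assume d: "max D d0 \<le> d"
    have opt: "rho_optimal f g1 m1 g2 m2 d (pd d)" using d0 d by simp
    note pp = pd_props[OF opt]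
    have pdc: "continuous_on S1 (pd d)" by (rule continuous_on_subset[OF pp(1)]) simp
    have Fi: "set_integrable lborel S1 F" by (rule si[OF F_cont])
    have pdi: "set_integrable lborel S1 (pd d)" by (rule si[OF pdc])
    have absi: "set_integrable lborel S1 (\<lambda>x. \<bar>F x - pd d x\<bar>)"
      by (rule set_integrable_abs[OF set_integral_diff(1)[OF Fi pdi]])
    define C where "C = {x\<in>S1. (\<lambda>x. \<bar>F x - pd d x\<bar>) x \<in> {\<delta>..}}"
    have absc: "continuous_on S1 (\<lambda>x. \<bar>F x - pd d x\<bar>)"
      by (intro continuous_intros F_cont pdc)
    have Cc: "compact C" unfolding C_def by (rule closed_level(2)[OF absc closed_atLeast])
    define I where "I = (LINT x:S1|lborel. \<bar>F x - pd d x\<bar>)"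
    have I0: "I \<ge> 0"
    proof -
      have zi: "set_integrable lborel S1 (\<lambda>x. 0::real)" by (rule si) simp
      have "(LINT x:S1|lborel. (0::real)) \<le> I" unfolding I_def by (rule set_integral_mono[OF zi absi]) simp
      thus ?thesis by simp
    qed
    have ID: "I < \<delta> * (r/2)" using D d I0 by (auto simp: I_def)
    have mk: "emeasure lborel {x\<in>S1. \<bar>F x - pd d x\<bar> \<ge> \<delta>} \<le> (1/\<delta>) * I"
      unfolding I_def
      by (rule integral_Markov_inequality'[OF absi S1_sets _ dpos]) simp
    have Cm: "measure lborel C \<le> (1/\<delta>) * I"
    proof -
      have "C = {x\<in>S1. \<bar>F x - pd d x\<bar> \<ge> \<delta>}" by (auto simp: C_def)
      hence "emeasure lborel C \<le> ennreal ((1/\<delta>) * I)" using mk by simp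
      thus ?thesis unfolding measure_def by (rule enn2real_leI[rotated]) (use dpos I0 in simp)
    qed
    have C2: "(1/\<delta>) * I < r/2"
    proof -
      have "(1/\<delta>) * I < (1/\<delta>) * (\<delta> * (r/2))" using ID dpos by (intro mult_strict_left_mono) auto
      thus ?thesis using dpos by simp
    qed
    define G where "G = {x\<in>S1. \<forall>u\<in>S2. 0 \<le> f x u}"
    define Gd where "Gd = {x\<in>S1. 0 \<le> pd d x}"
    have Geq: "G = {x\<in>S1. F x \<in> {0..}}" unfolding G_def using G_char by auto
    have Gc: "closed G" unfolding Geq by (rule closed_level(1)[OF F_cont closed_atLeast])
    have Gdc: "closed Gd"
    proof -
      have "Gd = {x\<in>S1. pd d x \<in> {0..}}" by (auto simp: Gd_def)
      thus ?thesis using closed_level(1)[OF pdc closed_atLeast] by simp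
    qed
    have sub: "G - Gd \<subseteq> Bn N \<union> C"
    proof
      fix x assume x: "x \<in> G - Gd"
      hence xs: "x \<in> S1" and F0: "0 \<le> F x" and pn: "pd d x < 0" using G_char by (auto simp: G_def Gd_def)
      show "x \<in> Bn N \<union> C"
      proof (cases "F x \<le> \<delta>")
        case True thus ?thesis using xs F0 by (auto simp: Bn_def \<delta>_def)
      next
        case False thus ?thesis using xs pn by (auto simp: C_def)
      qed
    qed
    have "measure lborel (G - Gd) \<le> measure lborel (Bn N \<union> C)"
    proof (rule measure_mono_fmeasurable[OF sub])
      show "G - Gd \<in> sets lborel" using Gc Gdc by (simp add: borel_closed sets.Diff)
      show "Bn N \<union> C \<in> fmeasurable lborel"
        by (rule fmeasurable_compact) (use Bn_compact Cc in auto)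
    qed
    also have "\<dots> \<le> measure lborel (Bn N) + measure lborel C"
      by (rule measure_Un_le) (use Bn_compact Cc in \<open>auto simp: borel_closed compact_imp_closed\<close>)
    also have "\<dots> < r/2 + r/2" using BN Cm C2 by linarith
    finally have "measure lborel (G - Gd) < r" by simp
    thus "norm (measure lborel ({x\<in>S1. \<forall>u\<in>S2. 0 \<le> f x u} - {x\<in>S1. 0 \<le> pd d x}) - 0) < r"
      by (simp add: G_def Gd_def)
  qed
qed

end
theorem theorem3p2:
  fixes f :: "real^'n \<Rightarrow> real^'p \<Rightarrow> real"
    and g1 :: "nat \<Rightarrow> real^'n \<Rightarrow> real" and m1 :: nat
    and g2 :: "nat \<Rightarrow> real^'p \<Rightarrow> real" and m2 :: nat
    and pd :: "nat \<Rightarrow> real^'n \<Rightarrow> real"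
    and F :: "real^'n \<Rightarrow> real"
  assumes g1_poly: "\<forall>l<m1. is_poly (g1 l)"
    and g2_poly: "\<forall>l<m2. is_poly (g2 l)"
    and f_poly: "is_poly2 f"
    and compact: "compact (semialg g1 m1 \<times> semialg g2 m2)"
    and nonempty: "semialg g1 m1 \<times> semialg g2 m2 \<noteq> {}"
    and archimedean: "archimedean_qm g1 m1 g2 m2"
    and optimal: "\<exists>d0. \<forall>d\<ge>d0. rho_optimal f g1 m1 g2 m2 d (pd d)"
    and F_def: "\<forall>x\<in>semialg g1 m1. F x = (INF u\<in>semialg g2 m2. f x u)"
    and zero_null: "emeasure lborel {x\<in>semialg g1 m1. F x = 0} = 0"
  shows "(\<lambda>d. LINT x:semialg g1 m1|lborel. \<bar>F x - pd d x\<bar>) \<longlonglongrightarrow> 0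
       \<and> (\<lambda>d. measure lborel ({x\<in>semialg g1 m1. \<forall>u\<in>semialg g2 m2. 0 \<le> f x u}
                              - {x\<in>semialg g1 m1. 0 \<le> pd d x})) \<longlonglongrightarrow> 0"
proof -
  interpret mainctx2 g1 m1 g2 m2 f F pd
  proof unfold_locales
    show "\<forall>l<m1. is_poly (g1 l)" by (rule g1_poly)
    show "\<forall>l<m2. is_poly (g2 l)" by (rule g2_poly)
    show "semialg g1 m1 \<times> semialg g2 m2 \<noteq> {}" by (rule nonempty)
    show "archimedean_qm g1 m1 g2 m2" by (rule archimedean)
    show "is_poly2 f" by (rule f_poly)
    show "compact (semialg g1 m1 \<times> semialg g2 m2)" by (rule compact)
    show "\<forall>x\<in>semialg g1 m1. F x = (INF u\<in>semialg g2 m2. f x u)" by (rule F_def)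
    show "\<exists>d0. \<forall>d\<ge>d0. rho_optimal f g1 m1 g2 m2 d (pd d)" by (rule optimal)
    show "emeasure lborel {x\<in>semialg g1 m1. F x = 0} = 0" by (rule zero_null)
  qed
  show ?thesis using int_lim meas_lim by simp
qed

end
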